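(* Let $r\ge1$ and for each $i\in[r]$ let $\ell_i\ge1$ and sequences $\alpha_{i1},\dots,\alpha_{i\ell_i}\in[N]$ and $\beta_{i1},\dots,\beta_{i\ell_i}\in[N]$ be given. Let $\pi$ be a uniformly random permutation of $[N]$ and $Y_i:=\prod_{j=1}^{\ell_i}\mathbf 1\{\pi(\alpha_{ij})=\beta_{ij}\}$. Let $A_i:=\{\alpha_{ij}:j\in[\ell_i]\}$, $B_i:=\{\beta_{ij}:j\in[\ell_i]\}$, and let $\Gamma$ be the graph on $[r]$ with an edge $ik$ whenever $A_i\cap A_k\ne\emptyset$ or $B_i\cap B_k\ne\emptyset$; let $b$ be the number of connected components of $\Gamma$, and $\mu_e:=\big|\bigcup_{i\in[r]}\{(\alpha_{ij},\beta_{ij}):j\in[\ell_i]\}\big|$. Then $$|\kappa(Y_1,\dots,Y_r)|\le C N^{-(b-1)-\mu_e},$$ where $C$ is a constant depending on $r$ and $\ell_1,\dots,\ell_r$ but not on $N$ (nor on the $\alpha_{ij},\beta_{ij}$).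
   Context: $[N]:=\{1,\dots,N\}$. $\kappa(X_1,\dots,X_r)$ denotes the mixed (joint) cumulant of random variables $X_1,\dots,X_r$. *)

theory Defs
  imports "HOL-Probability.Probability" "HOL-Combinatorics.Permutations"
begin

definition joint_cumulant :: "'a measure \<Rightarrow> 'i set \<Rightarrow> ('i \<Rightarrow> 'a \<Rightarrow> real) \<Rightarrow> real" where
  "joint_cumulant M I X =
     (\<Sum>P\<in>{P. partition_on I P}.
        (-1) ^ (card P - 1) * fact (card P - 1) *
        (\<Prod>Bl\<in>P. integral\<^sup>L M (\<lambda>\<omega>. \<Prod>i\<in>Bl. X i \<omega>)))"

definition unif_perm :: "nat \<Rightarrow> (nat \<Rightarrow> nat) measure" where
  "unif_perm N = measure_pmf (pmf_of_set {\<sigma>. \<sigma> permutes {1..N}})"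

definition match_indicator ::
  "(nat \<Rightarrow> nat) \<Rightarrow> (nat \<Rightarrow> nat \<Rightarrow> nat) \<Rightarrow> (nat \<Rightarrow> nat \<Rightarrow> nat) \<Rightarrow> nat \<Rightarrow> (nat \<Rightarrow> nat) \<Rightarrow> real" where
  "match_indicator l \<alpha> \<beta> i \<pi> = (\<Prod>j\<in>{1..l i}. if \<pi> (\<alpha> i j) = \<beta> i j then 1 else 0)"

definition dep_edges ::
  "nat \<Rightarrow> (nat \<Rightarrow> nat) \<Rightarrow> (nat \<Rightarrow> nat \<Rightarrow> nat) \<Rightarrow> (nat \<Rightarrow> nat \<Rightarrow> nat) \<Rightarrow> (nat \<times> nat) set" where
  "dep_edges r l \<alpha> \<beta> = {(i, k). i \<in> {1..r} \<and> k \<in> {1..r} \<and>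
      ((\<alpha> i ` {1..l i}) \<inter> (\<alpha> k ` {1..l k}) \<noteq> {} \<or>
       (\<beta> i ` {1..l i}) \<inter> (\<beta> k ` {1..l k}) \<noteq> {})}"

definition num_components ::
  "nat \<Rightarrow> (nat \<Rightarrow> nat) \<Rightarrow> (nat \<Rightarrow> nat \<Rightarrow> nat) \<Rightarrow> (nat \<Rightarrow> nat \<Rightarrow> nat) \<Rightarrow> nat" where
  "num_components r l \<alpha> \<beta> = card ({1..r} // ((dep_edges r l \<alpha> \<beta>) \<union> Id_on {1..r})\<^sup>*)"

definition mu_e ::
  "nat \<Rightarrow> (nat \<Rightarrow> nat) \<Rightarrow> (nat \<Rightarrow> nat \<Rightarrow> nat) \<Rightarrow> (nat \<Rightarrow> nat \<Rightarrow> nat) \<Rightarrow> nat" where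
  "mu_e r l \<alpha> \<beta> = card (\<Union>i\<in>{1..r}. (\<lambda>j. (\<alpha> i j, \<beta> i j)) ` {1..l i})"

end

theory Submission
  imports Defs "HOL-Computational_Algebra.Polynomial" "HOL-Library.FuncSet"
begin

definition fib :: "('i \<Rightarrow> nat) \<Rightarrow> 'i set \<Rightarrow> nat \<Rightarrow> 'i set" where
  "fib f I v = {i\<in>I. f i = v}"

definition col :: "('i set \<Rightarrow> real) \<Rightarrow> 'i set \<Rightarrow> nat \<Rightarrow> real" where
  "col g I z = (\<Sum>f\<in>I \<rightarrow>\<^sub>E {..<z}. \<Prod>v<z. g (fib f I v))"

definition kerp :: "('i \<Rightarrow> nat) \<Rightarrow> 'i set \<Rightarrow> 'i set set" where
  "kerp f I = (\<lambda>v. fib f I v) ` (f ` I)"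

definition ffp :: "nat \<Rightarrow> real poly" where
  "ffp k = (\<Prod>j<k. [:- real j, 1:])"

definition Pol :: "('i set \<Rightarrow> real) \<Rightarrow> 'i set \<Rightarrow> real poly" where
  "Pol g I = (\<Sum>P\<in>{P. partition_on I P}. smult (\<Prod>s\<in>P. g s) (ffp (card P)))"

lemma kerp_partition: "partition_on I (kerp f I)"
  unfolding partition_on_def kerp_def fib_def disjoint_def by auto

definition blk :: "'i set set \<Rightarrow> 'i \<Rightarrow> 'i set" where
  "blk P i = (THE s. s \<in> P \<and> i \<in> s)"

lemma blk_eq: assumes "partition_on I P" "s \<in> P" "i \<in> s" shows "blk P i = s"
  unfolding blk_def
proof (rule the_equality)
  show "s \<in> P \<and> i \<in> s" using assms by auto
  fix s' assume "s' \<in> P \<and> i \<in> s'"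
  then show "s' = s" using assms partition_onD2[OF assms(1)] unfolding disjoint_def by blast
qed

lemma blk_in: assumes "partition_on I P" "i \<in> I" shows "blk P i \<in> P" "i \<in> blk P i"
proof -
  obtain s where "s \<in> P" "i \<in> s" using assms partition_onD1[OF assms(1)] by auto
  then show "blk P i \<in> P" "i \<in> blk P i" using blk_eq[OF assms(1)] by auto
qed

lemma prod_fib:
  assumes "finite I" "f \<in> I \<rightarrow>\<^sub>E {..<z}" "g {} = 1"
  shows "(\<Prod>v<z. g (fib f I v)) = (\<Prod>s\<in>kerp f I. g s)"
proof -
  have "(\<Prod>v<z. g (fib f I v)) = (\<Prod>v\<in>f ` I. g (fib f I v))"
  proof (rule prod.mono_neutral_right)
    show "f ` I \<subseteq> {..<z}" using assms(2) by auto
    show "\<forall>i\<in>{..<z} - f ` I. g (fib f I i) = 1"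
    proof
      fix i assume "i \<in> {..<z} - f ` I"
      then have "fib f I i = {}" unfolding fib_def by auto
      then show "g (fib f I i) = 1" using assms(3) by simp
    qed
  qed auto
  also have "\<dots> = (\<Prod>s\<in>kerp f I. g s)"
    unfolding kerp_def
    by (rule prod.reindex[symmetric, unfolded comp_def]) (auto simp: inj_on_def fib_def)
  finally show ?thesis .
qed

lemma card_ker:
  assumes fin: "finite I" and P: "partition_on I P"
  shows "card {f \<in> I \<rightarrow>\<^sub>E {..<z}. kerp f I = P} = (\<Prod>j<card P. z - j)"
proof -
  define A where "A = {f \<in> I \<rightarrow>\<^sub>E {..<z}. kerp f I = P}"
  define B where "B = {h \<in> P \<rightarrow>\<^sub>E {..<z}. inj_on h P}"
  define \<Phi> where "\<Phi> f = restrict (\<lambda>s. f (SOME i. i \<in> s)) P" for f :: "'a \<Rightarrow> nat"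
  define \<Psi> where "\<Psi> h = restrict (\<lambda>i. h (blk P i)) I" for h :: "'a set \<Rightarrow> nat"
  have finP: "finite P" using finite_elements[OF fin P] .
  have ne: "s \<noteq> {}" if "s \<in> P" for s using P that partition_onD3 by blast
  have sub: "s \<subseteq> I" if "s \<in> P" for s using P that partition_onD1 by blast
  have const: "f (SOME i. i \<in> s) = f i" if "f \<in> A" "s \<in> P" "i \<in> s" for f s i
  proof -
    from that have "s \<in> kerp f I" unfolding A_def by auto
    then obtain v where "s = fib f I v" unfolding kerp_def by auto
    moreover have "(SOME i. i \<in> s) \<in> s" using ne[OF that(2)] by (simp add: some_in_eq)
    ultimately show ?thesis using that(3) unfolding fib_def by auto
  qed
  have "bij_betw \<Phi> A B"
  proof (rule bij_betw_byWitness[where f'=\<Psi>])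
    show "\<forall>a\<in>A. \<Psi> (\<Phi> a) = a"
    proof
      fix f assume f: "f \<in> A"
      show "\<Psi> (\<Phi> f) = f"
      proof
        fix i show "\<Psi> (\<Phi> f) i = f i"
        proof (cases "i \<in> I")
          case True
          then show ?thesis unfolding \<Psi>_def \<Phi>_def
            using blk_in[OF P True] const[OF f] by auto
        next
          case False
          then show ?thesis using f unfolding \<Psi>_def A_def by (auto simp: PiE_def extensional_def)
        qed
      qed
    qed
    show "\<forall>h\<in>B. \<Phi> (\<Psi> h) = h"
    proof
      fix h assume h: "h \<in> B"
      show "\<Phi> (\<Psi> h) = h"
      proof
        fix s show "\<Phi> (\<Psi> h) s = h s"
        proof (cases "s \<in> P")
          case True
          have "(SOME i. i \<in> s) \<in> s" using ne[OF True] by (simp add: some_in_eq)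
          then show ?thesis using True sub[OF True] blk_eq[OF P True] unfolding \<Psi>_def \<Phi>_def by auto
        next
          case False
          then show ?thesis using h unfolding \<Phi>_def B_def by (auto simp: PiE_def extensional_def)
        qed
      qed
    qed
    show "\<Phi> ` A \<subseteq> B"
    proof
      fix h assume "h \<in> \<Phi> ` A"
      then obtain f where f: "f \<in> A" and h: "h = \<Phi> f" by auto
      have "h \<in> P \<rightarrow>\<^sub>E {..<z}"
      proof -
        have "f (SOME i. i \<in> s) < z" if "s \<in> P" for s
        proof -
          have "(SOME i. i \<in> s) \<in> s" using ne[OF that] by (simp add: some_in_eq)
          then show ?thesis using sub[OF that] f unfolding A_def by auto
        qed
        then show ?thesis unfolding h \<Phi>_def by auto
      qed
      moreover have "inj_on h P"
      proof (rule inj_onI)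
        fix s s' assume s: "s \<in> P" "s' \<in> P" "h s = h s'"
        from s(1) f have "s \<in> kerp f I" unfolding A_def by auto
        then obtain v where v: "s = fib f I v" unfolding kerp_def by auto
        from s(2) f have "s' \<in> kerp f I" unfolding A_def by auto
        then obtain v' where v': "s' = fib f I v'" unfolding kerp_def by auto
        have a: "(SOME i. i \<in> s) \<in> s" using ne[OF s(1)] by (simp add: some_in_eq)
        have b: "(SOME i. i \<in> s') \<in> s'" using ne[OF s(2)] by (simp add: some_in_eq)
        have "v = v'" using s(3) a b s(1,2) unfolding h \<Phi>_def v v' fib_def by auto
        then show "s = s'" using v v' by simp
      qed
      ultimately show "h \<in> B" unfolding B_def by auto
    qed
    show "\<Psi> ` B \<subseteq> A"
    proof
      fix f assume "f \<in> \<Psi> ` B"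
      then obtain h where h: "h \<in> B" and f: "f = \<Psi> h" by auto
      have "f \<in> I \<rightarrow>\<^sub>E {..<z}"
        using h blk_in[OF P] unfolding f \<Psi>_def B_def by auto
      moreover have "kerp f I = P"
      proof -
        have fibeq: "fib f I (h (blk P i0)) = blk P i0" if "i0 \<in> I" for i0
        proof -
          have hi: "inj_on h P" using h unfolding B_def by auto
          have iff: "(h (blk P i) = h (blk P i0)) = (blk P i = blk P i0)" if "i \<in> I" for i
          proof -
            have a: "blk P i \<in> P" using blk_in[OF P that] by simp
            have b: "blk P i0 \<in> P" using blk_in[OF P \<open>i0 \<in> I\<close>] by simp
            show ?thesis by (rule inj_on_eq_iff[OF hi a b])
          qed
          have "fib f I (h (blk P i0)) = {i\<in>I. h (blk P i) = h (blk P i0)}"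
            unfolding fib_def f \<Psi>_def by auto
          also have "\<dots> = {i\<in>I. blk P i = blk P i0}" using iff by auto
          finally have "fib f I (h (blk P i0)) = {i\<in>I. blk P i = blk P i0}" .
          also have "\<dots> = blk P i0"
          proof
            show "{i \<in> I. blk P i = blk P i0} \<subseteq> blk P i0"
            proof
              fix i assume "i \<in> {i \<in> I. blk P i = blk P i0}"
              then show "i \<in> blk P i0" using blk_in(2)[OF P, of i] by force
            qed
            show "blk P i0 \<subseteq> {i \<in> I. blk P i = blk P i0}"
            proof
              fix i assume i: "i \<in> blk P i0"
              have bi: "blk P i0 \<in> P" using blk_in(1)[OF P that] .
              have "i \<in> I" using sub[OF bi] i by auto
              moreover have "blk P i = blk P i0" using blk_eq[OF P bi i] .
              ultimately show "i \<in> {i \<in> I. blk P i = blk P i0}" by simp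
            qed
          qed
          finally show ?thesis .
        qed
        have "kerp f I = (\<lambda>i. fib f I (f i)) ` I" unfolding kerp_def by auto
        also have "\<dots> = blk P ` I"
        proof (rule image_cong[OF refl])
          fix i assume "i \<in> I"
          then have "f i = h (blk P i)" unfolding f \<Psi>_def by simp
          then show "fib f I (f i) = blk P i" using fibeq[OF \<open>i \<in> I\<close>] by simp
        qed
        also have "\<dots> = P"
        proof
          show "blk P ` I \<subseteq> P" using blk_in(1)[OF P] by blast
          show "P \<subseteq> blk P ` I"
          proof
            fix s assume s: "s \<in> P"
            then obtain i where "i \<in> s" using ne by blast
            then have "blk P i = s" "i \<in> I" using blk_eq[OF P s] sub[OF s] by auto
            then show "s \<in> blk P ` I" by force
          qed
        qed
        finally show ?thesis .
      qed
      ultimately show "f \<in> A" unfolding A_def by auto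
    qed
  qed
  then have "card A = card B" by (rule bij_betw_same_card)
  also have "card B = (\<Prod>j<card P. z - j)"
    unfolding B_def using card_inj_on_subset_funcset[of P "{..<z}" P] finP
    by (simp add: atLeast0LessThan)
  finally show ?thesis unfolding A_def .
qed

lemma real_prod_diff: "real (\<Prod>j<k. z - j) = (\<Prod>j<k. real z - real j)"
proof (cases "k \<le> z")
  case True
  then show ?thesis by (auto simp: of_nat_diff intro!: prod.cong)
next
  case False
  then have "z \<in> {..<k}" by auto
  then have a: "(\<Prod>j<k. z - j) = 0" by (intro prod_zero) auto
  have b: "(\<Prod>j<k. real z - real j) = 0" using \<open>z \<in> {..<k}\<close> by (intro prod_zero) auto
  show ?thesis by (subst a) (simp only: b of_nat_0)
qed

lemma poly_ffp: "poly (ffp k) x = (\<Prod>j<k. x - real j)"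
  unfolding ffp_def by (simp add: poly_prod)

lemma col_Pol:
  assumes fin: "finite I" and g0: "g {} = 1"
  shows "poly (Pol g I) (real z) = col g I z"
proof -
  let ?F = "I \<rightarrow>\<^sub>E {..<z}"
  let ?Parts = "{P. partition_on I P}"
  have finParts: "finite ?Parts" using finitely_many_partition_on[OF fin] .
  have finF: "finite ?F" using fin by (simp add: finite_PiE)
  have "col g I z = (\<Sum>f\<in>?F. \<Prod>s\<in>kerp f I. g s)"
    unfolding col_def using prod_fib[of I _ z g] fin g0 by (intro sum.cong) auto
  also have "\<dots> = (\<Sum>P\<in>?Parts. \<Sum>f\<in>{f\<in>?F. kerp f I = P}. \<Prod>s\<in>kerp f I. g s)"
    by (rule sum.group[symmetric]) (use finF finParts kerp_partition in auto)
  also have "\<dots> = (\<Sum>P\<in>?Parts. real (card {f\<in>?F. kerp f I = P}) * (\<Prod>s\<in>P. g s))"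
    by (intro sum.cong) auto
  also have "\<dots> = (\<Sum>P\<in>?Parts. (\<Prod>s\<in>P. g s) * (\<Prod>j<card P. real z - real j))"
    using card_ker[OF fin] real_prod_diff by (intro sum.cong) (auto simp: mult.commute)
  also have "\<dots> = poly (Pol g I) (real z)"
    unfolding Pol_def by (simp add: poly_sum poly_ffp)
  finally show ?thesis by simp
qed

lemma coeff_ffp: "coeff (ffp (Suc n)) 1 = (-1)^n * fact n"
proof (induction n)
  case 0
  then show ?case by (simp add: ffp_def)
next
  case (Suc n)
  have e: "ffp (Suc (Suc n)) = ffp (Suc n) * [:- real (Suc n), 1:]"
    unfolding ffp_def by simp
  have c0: "coeff (ffp (Suc n)) 0 = 0"
    by (simp only: poly_0_coeff_0[symmetric] poly_ffp) (rule prod_zero, auto)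
  show ?case unfolding e
    by (simp add: coeff_mult c0 Suc.IH[unfolded One_nat_def] algebra_simps)
qed

lemma poly_eq_nat:
  fixes p q :: "real poly"
  assumes "\<And>z::nat. poly p (real z) = poly q (real z)"
  shows "p = q"
proof (rule ccontr)
  assume "p \<noteq> q"
  then have "p - q \<noteq> 0" by simp
  then have fin: "finite {x. poly (p - q) x = 0}" by (rule poly_roots_finite)
  have "range real \<subseteq> {x. poly (p - q) x = 0}" using assms by auto
  then have "finite (range real)" using fin finite_subset by blast
  moreover have "infinite (range real)"
    using range_inj_infinite[of real] inj_of_nat by simp
  ultimately show False by simp
qed

lemma card_partition_pos:
  assumes "finite I" "I \<noteq> {}" "partition_on I P"
  shows "card P \<ge> 1"
proof -
  have "finite P" using finite_elements assms by blast
  moreover have "P \<noteq> {}" using assms partition_onD1 by fastforce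
  ultimately show ?thesis by (simp add: Suc_leI card_gt_0_iff)
qed

lemma coeff_Pol:
  assumes "finite I" "I \<noteq> {}"
  shows "coeff (Pol g I) 1 = (\<Sum>P\<in>{P. partition_on I P}.
            (-1) ^ (card P - 1) * fact (card P - 1) * (\<Prod>s\<in>P. g s))"
  unfolding Pol_def coeff_sum
proof (rule sum.cong[OF refl])
  fix P assume "P \<in> {P. partition_on I P}"
  then have "card P \<ge> 1" using card_partition_pos assms by blast
  then obtain n where n: "card P = Suc n" by (cases "card P") auto
  show "coeff (smult (\<Prod>s\<in>P. g s) (ffp (card P))) 1 =
        (-1) ^ (card P - 1) * fact (card P - 1) * (\<Prod>s\<in>P. g s)"
    unfolding n using coeff_ffp[of n] by simp
qed

lemma fib_Int: "fib f I v \<inter> J = fib f (I \<inter> J) v"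
  unfolding fib_def by auto

lemma fib_Diff: "fib f I v - J = fib f (I - J) v"
  unfolding fib_def by auto

lemma fib_restrict: "J' \<subseteq> J \<Longrightarrow> fib (restrict f J) J' v = fib f J' v"
  unfolding fib_def by auto

lemma sum_PiE_split:
  fixes F G :: "('a \<Rightarrow> nat) \<Rightarrow> real"
  assumes "J \<subseteq> I"
  shows "(\<Sum>f\<in>I \<rightarrow>\<^sub>E B. F (restrict f J) * G (restrict f (I - J))) =
         (\<Sum>f\<in>J \<rightarrow>\<^sub>E B. F f) * (\<Sum>f\<in>(I - J) \<rightarrow>\<^sub>E B. G f)"
proof -
  define m where "m f = (restrict f J, restrict f (I - J))" for f :: "'a \<Rightarrow> nat"
  define m' where "m' p = (\<lambda>i. if i \<in> J then fst p i else snd p i)" for p :: "('a \<Rightarrow> nat) \<times> ('a \<Rightarrow> nat)"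
  have bij: "bij_betw m (I \<rightarrow>\<^sub>E B) ((J \<rightarrow>\<^sub>E B) \<times> ((I - J) \<rightarrow>\<^sub>E B))"
  proof (rule bij_betw_byWitness[where f'=m'])
    show "\<forall>a\<in>I \<rightarrow>\<^sub>E B. m' (m a) = a"
      unfolding m_def m'_def using assms by (auto simp: PiE_def extensional_def fun_eq_iff)
    show "\<forall>a'\<in>(J \<rightarrow>\<^sub>E B) \<times> ((I - J) \<rightarrow>\<^sub>E B). m (m' a') = a'"
      unfolding m_def m'_def using assms by (auto simp: PiE_def extensional_def fun_eq_iff)
    show "m ` (I \<rightarrow>\<^sub>E B) \<subseteq> (J \<rightarrow>\<^sub>E B) \<times> ((I - J) \<rightarrow>\<^sub>E B)"
      unfolding m_def using assms by auto
    show "m' ` ((J \<rightarrow>\<^sub>E B) \<times> ((I - J) \<rightarrow>\<^sub>E B)) \<subseteq> I \<rightarrow>\<^sub>E B"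
      unfolding m'_def using assms by (auto simp: PiE_def extensional_def)
  qed
  have "(\<Sum>f\<in>I \<rightarrow>\<^sub>E B. F (restrict f J) * G (restrict f (I - J))) =
        (\<Sum>p\<in>(J \<rightarrow>\<^sub>E B) \<times> ((I - J) \<rightarrow>\<^sub>E B). F (fst p) * G (snd p))"
    using sum.reindex_bij_betw[OF bij, of "\<lambda>p. F (fst p) * G (snd p)"] by (simp add: m_def)
  also have "\<dots> = (\<Sum>f\<in>J \<rightarrow>\<^sub>E B. F f) * (\<Sum>f\<in>(I - J) \<rightarrow>\<^sub>E B. G f)"
    by (simp add: sum_product sum.cartesian_product split_beta)
  finally show ?thesis .
qed

lemma col_split:
  assumes "J \<subseteq> I" "\<And>s. s \<subseteq> I \<Longrightarrow> g s = g (s \<inter> J) * g (s - J)"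
  shows "col g I z = col g J z * col g (I - J) z"
proof -
  have "col g I z = (\<Sum>f\<in>I \<rightarrow>\<^sub>E {..<z}.
          (\<Prod>v<z. g (fib (restrict f J) J v)) * (\<Prod>v<z. g (fib (restrict f (I - J)) (I - J) v)))"
    unfolding col_def prod.distrib[symmetric]
  proof (intro sum.cong refl prod.cong)
    fix f v
    have "g (fib f I v) = g (fib f I v \<inter> J) * g (fib f I v - J)"
      by (rule assms(2)) (auto simp: fib_def)
    also have "\<dots> = g (fib (restrict f J) J v) * g (fib (restrict f (I - J)) (I - J) v)"
      using assms(1) by (simp add: fib_Int fib_Diff fib_restrict Int_absorb1)
    finally show "g (fib f I v) = g (fib (restrict f J) J v) * g (fib (restrict f (I - J)) (I - J) v)" .
  qed
  also have "\<dots> = col g J z * col g (I - J) z"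
    unfolding col_def
    by (rule sum_PiE_split[OF assms(1), of "\<lambda>f. \<Prod>v<z. g (fib f J v)" "\<lambda>f. \<Prod>v<z. g (fib f (I - J) v)"])
  finally show ?thesis .
qed

lemma cum_split:
  assumes fin: "finite I" and J: "J \<subseteq> I" "J \<noteq> {}" "I - J \<noteq> {}" and g0: "g {} = 1"
    and fac: "\<And>s. s \<subseteq> I \<Longrightarrow> g s = g (s \<inter> J) * g (s - J)"
  shows "coeff (Pol g I) 1 = 0"
proof -
  have finJ: "finite J" using fin J finite_subset by blast
  have finJ': "finite (I - J)" using fin by simp
  have e: "Pol g I = Pol g J * Pol g (I - J)"
  proof (rule poly_eq_nat)
    fix z :: nat
    show "poly (Pol g I) (real z) = poly (Pol g J * Pol g (I - J)) (real z)"
      using col_Pol[of I g z, OF fin g0] col_Pol[of J g z, OF finJ g0]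
        col_Pol[of "I - J" g z, OF finJ' g0] col_split[OF J(1) fac]
      by simp
  qed
  have z0: "coeff (Pol g K) 0 = 0" if "finite K" "K \<noteq> {}" for K
  proof -
    have "coeff (Pol g K) 0 = poly (Pol g K) (real 0)" by (simp add: poly_0_coeff_0)
    also have "\<dots> = col g K 0" using col_Pol[of K g 0, OF that(1) g0] .
    also have "\<dots> = 0"
    proof -
      have "K \<rightarrow>\<^sub>E {..<0::nat} = {}" using that(2) by (auto simp: PiE_eq_empty_iff)
      then show ?thesis unfolding col_def by simp
    qed
    finally show ?thesis .
  qed
  show ?thesis unfolding e
    by (simp add: coeff_mult z0[OF finJ J(2)] z0[OF finJ' J(3)] numeral_2_eq_2 atMost_Suc)
qed


definition Dif :: "'a set \<Rightarrow> ('a set \<Rightarrow> real) \<Rightarrow> real" where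
  "Dif T h = (\<Sum>V\<in>Pow T. (-1) ^ card (T - V) * h V)"

lemma Dif_insert:
  assumes "finite T" "x \<notin> T"
  shows "Dif (insert x T) h = Dif T (\<lambda>V. h (insert x V)) - Dif T h"
proof -
  have disj: "Pow T \<inter> insert x ` Pow T = {}" using assms(2) by auto
  have inj: "inj_on (insert x) (Pow T)"
  proof (rule inj_onI)
    fix a b assume "a \<in> Pow T" "b \<in> Pow T" "insert x a = insert x b"
    then have "insert x a - {x} = insert x b - {x}" by simp
    then show "a = b" using \<open>a \<in> Pow T\<close> \<open>b \<in> Pow T\<close> assms(2) by auto
  qed
  have c1: "card (insert x T - V) = Suc (card (T - V))" if "V \<subseteq> T" for V
  proof -
    have "insert x T - V = insert x (T - V)" using that assms(2) by auto
    then show ?thesis using assms by simp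
  qed
  have c2: "card (insert x T - insert x V) = card (T - V)" if "V \<subseteq> T" for V
  proof -
    have "insert x T - insert x V = T - V" using that assms(2) by auto
    then show ?thesis by simp
  qed
  have "Dif (insert x T) h = (\<Sum>V\<in>Pow T. (-1) ^ card (insert x T - V) * h V) +
        (\<Sum>V\<in>insert x ` Pow T. (-1) ^ card (insert x T - V) * h V)"
    unfolding Dif_def Pow_insert using assms by (intro sum.union_disjoint) auto
  also have "(\<Sum>V\<in>insert x ` Pow T. (-1) ^ card (insert x T - V) * h V) =
             (\<Sum>V\<in>Pow T. (-1) ^ card (insert x T - insert x V) * h (insert x V))"
    by (rule sum.reindex[OF inj, unfolded comp_def])
  also have "\<dots> = Dif T (\<lambda>V. h (insert x V))"
    unfolding Dif_def
  proof (intro sum.cong refl)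
    fix V assume V: "V \<in> Pow T"
    have e: "insert x T - insert x V = T - V" using V assms(2) by auto
    show "(-1) ^ card (insert x T - insert x V) * h (insert x V) = (-1) ^ card (T - V) * h (insert x V)"
      by (simp only: e)
  qed
  also have "(\<Sum>V\<in>Pow T. (-1) ^ card (insert x T - V) * h V) = - Dif T h"
    unfolding Dif_def sum_negf[symmetric] by (intro sum.cong refl) (simp add: c1)
  finally show ?thesis by simp
qed

lemma Dif_indep:
  assumes "finite T" "x \<in> T" "\<And>V. V \<subseteq> T - {x} \<Longrightarrow> h (insert x V) = h V"
  shows "Dif T h = 0"
proof -
  have T: "T = insert x (T - {x})" using assms(2) by auto
  have "Dif T h = Dif (T - {x}) (\<lambda>V. h (insert x V)) - Dif (T - {x}) h"
    by (subst T, rule Dif_insert) (use assms in auto)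
  also have "Dif (T - {x}) (\<lambda>V. h (insert x V)) = Dif (T - {x}) h"
    unfolding Dif_def using assms(3) by (intro sum.cong refl) auto
  finally show ?thesis by simp
qed

lemma Dif_support:
  assumes "finite T" "\<And>V. V \<subseteq> T \<Longrightarrow> h V = h (V \<inter> W)" "T - W \<noteq> {}"
  shows "Dif T h = 0"
proof -
  obtain x where x: "x \<in> T" "x \<notin> W" using assms(3) by auto
  show ?thesis
  proof (rule Dif_indep[OF assms(1) x(1)])
    fix V assume V: "V \<subseteq> T - {x}"
    have "insert x V \<subseteq> T" using V x by auto
    then have "h (insert x V) = h (insert x V \<inter> W)" by (rule assms(2))
    also have "insert x V \<inter> W = V \<inter> W" using x by auto
    also have "V \<subseteq> T" using V by auto
    then have "h V = h (V \<inter> W)" by (rule assms(2))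
    then have "h (V \<inter> W) = h V" by simp
    finally show "h (insert x V) = h V" .
  qed
qed

lemma mobius:
  assumes "finite s"
  shows "(\<Sum>T\<in>Pow s. Dif T h) = h s"
  using assms
proof (induction s arbitrary: h rule: finite_induct)
  case empty
  then show ?case by (simp add: Dif_def)
next
  case (insert x s)
  have disj: "Pow s \<inter> insert x ` Pow s = {}" using insert by auto
  have inj: "inj_on (insert x) (Pow s)"
  proof (rule inj_onI)
    fix a b assume "a \<in> Pow s" "b \<in> Pow s" "insert x a = insert x b"
    then have "insert x a - {x} = insert x b - {x}" by simp
    then show "a = b" using \<open>a \<in> Pow s\<close> \<open>b \<in> Pow s\<close> insert(2) by auto
  qed
  have fin: "finite T" if "T \<in> Pow s" for T using insert that finite_subset by auto
  have "(\<Sum>T\<in>Pow (insert x s). Dif T h) = (\<Sum>T\<in>Pow s. Dif T h) + (\<Sum>T\<in>insert x ` Pow s. Dif T h)"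
    unfolding Pow_insert using insert by (intro sum.union_disjoint) auto
  also have "(\<Sum>T\<in>insert x ` Pow s. Dif T h) = (\<Sum>T\<in>Pow s. Dif (insert x T) h)"
    by (rule sum.reindex[OF inj, unfolded comp_def])
  also have "\<dots> = (\<Sum>T\<in>Pow s. Dif T (\<lambda>V. h (insert x V)) - Dif T h)"
    using insert fin by (intro sum.cong refl Dif_insert) auto
  also have "(\<Sum>T\<in>Pow s. Dif T h) + \<dots> = (\<Sum>T\<in>Pow s. Dif T (\<lambda>V. h (insert x V)))"
    by (simp add: sum_subtractf)
  also have "\<dots> = h (insert x s)" using insert.IH .
  finally show ?case .
qed

lemma Dif_sum: "Dif T (\<lambda>V. \<Sum>i\<in>A. h i V) = (\<Sum>i\<in>A. Dif T (h i))"
  unfolding Dif_def by (simp add: sum_distrib_left sum.swap[of _ A])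

lemma Dif_add: "Dif T (\<lambda>V. h1 V + h2 V) = Dif T h1 + Dif T h2"
  unfolding Dif_def by (simp add: algebra_simps sum.distrib)

lemma Dif_diff: "Dif T (\<lambda>V. h1 V - h2 V) = Dif T h1 - Dif T h2"
  unfolding Dif_def by (simp add: algebra_simps sum_subtractf)

lemma Dif_cmult: "Dif T (\<lambda>V. c * h V) = c * Dif T h"
  unfolding Dif_def by (simp add: algebra_simps sum_distrib_left)

lemma Dif_cong: "(\<And>V. V \<subseteq> T \<Longrightarrow> h1 V = h2 V) \<Longrightarrow> Dif T h1 = Dif T h2"
  unfolding Dif_def by (intro sum.cong refl) auto

lemma Dif_bound: "\<bar>Dif T h\<bar> \<le> (\<Sum>V\<in>Pow T. \<bar>h V\<bar>)"
  unfolding Dif_def by (rule order.trans[OF sum_abs]) (simp add: abs_mult)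

lemma prod_indicator:
  assumes "finite A"
  shows "(\<Prod>v\<in>A. if C v then 1 else (0::real)) = (if \<forall>v\<in>A. C v then 1 else 0)"
  using assms by (induction rule: finite_induct) auto

definition mF :: "('a set \<Rightarrow> real) \<Rightarrow> 'a set set \<Rightarrow> 'a set \<Rightarrow> real" where
  "mF g F s = g s * (if \<forall>T\<in>F. T \<subseteq> s \<or> T \<inter> s = {} then 1 else 0)"

lemma col_expand:
  assumes fin: "finite I"
    and m: "\<And>s. s \<subseteq> I \<Longrightarrow> m s = g s * (\<Prod>T\<in>Pow s - {{}}. 1 + y T)"
  shows "col m I z = (\<Sum>F\<in>Pow (Pow I - {{}}). (\<Prod>T\<in>F. y T) * col (mF g F) I z)"
proof -
  let ?E = "Pow I - {{}}"
  let ?G = "\<lambda>f. {T\<in>?E. \<exists>v<z. T \<subseteq> fib f I v}"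
  have finE: "finite ?E" using fin by simp
  have step: "(\<Prod>v<z. m (fib f I v)) = (\<Prod>v<z. g (fib f I v)) * (\<Sum>F\<in>Pow (?G f). \<Prod>T\<in>F. y T)"
    if f: "f \<in> I \<rightarrow>\<^sub>E {..<z}" for f
  proof -
    have "(\<Prod>v<z. m (fib f I v)) = (\<Prod>v<z. g (fib f I v) * (\<Prod>T\<in>Pow (fib f I v) - {{}}. 1 + y T))"
      by (intro prod.cong refl m) (auto simp: fib_def)
    also have "\<dots> = (\<Prod>v<z. g (fib f I v)) * (\<Prod>v<z. \<Prod>T\<in>Pow (fib f I v) - {{}}. 1 + y T)"
      by (simp add: prod.distrib)
    also have "(\<Prod>v<z. \<Prod>T\<in>Pow (fib f I v) - {{}}. 1 + y T) = (\<Prod>T\<in>(\<Union>v<z. Pow (fib f I v) - {{}}). 1 + y T)"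
      by (rule prod.UNION_disjoint[symmetric]) (auto simp: fib_def intro: finite_subset[OF _ fin])
    also have "(\<Union>v<z. Pow (fib f I v) - {{}}) = ?G f" by (auto simp: fib_def)
    also have "(\<Prod>T\<in>?G f. 1 + y T) = (\<Sum>F\<in>Pow (?G f). \<Prod>T\<in>F. y T)"
      using prod_add[of "?G f" y "\<lambda>_. 1"] finE by (simp add: finite_subset add.commute)
    finally show ?thesis .
  qed
  have compat: "(F \<subseteq> ?G f) = (\<forall>v<z. \<forall>T\<in>F. T \<subseteq> fib f I v \<or> T \<inter> fib f I v = {})"
    if f: "f \<in> I \<rightarrow>\<^sub>E {..<z}" and F: "F \<subseteq> ?E" for f F
  proof
    assume a: "F \<subseteq> ?G f"
    show "\<forall>v<z. \<forall>T\<in>F. T \<subseteq> fib f I v \<or> T \<inter> fib f I v = {}"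
    proof (intro allI impI ballI)
      fix v T assume "v < z" "T \<in> F"
      then obtain w where "w < z" "T \<subseteq> fib f I w" using a by blast
      then show "T \<subseteq> fib f I v \<or> T \<inter> fib f I v = {}" by (cases "w = v") (auto simp: fib_def)
    qed
  next
    assume a: "\<forall>v<z. \<forall>T\<in>F. T \<subseteq> fib f I v \<or> T \<inter> fib f I v = {}"
    show "F \<subseteq> ?G f"
    proof
      fix T assume T: "T \<in> F"
      then have TE: "T \<in> ?E" using F by auto
      then obtain i where i: "i \<in> T" by auto
      have iI: "i \<in> I" using TE i by auto
      have fi: "f i < z" using f iI by auto
      have "T \<inter> fib f I (f i) \<noteq> {}" using i iI by (auto simp: fib_def)
      then have "T \<subseteq> fib f I (f i)" using a fi T by blast
      then show "T \<in> ?G f" using TE fi by auto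
    qed
  qed
  have "col m I z = (\<Sum>f\<in>I \<rightarrow>\<^sub>E {..<z}. \<Sum>F\<in>Pow (?G f). (\<Prod>v<z. g (fib f I v)) * (\<Prod>T\<in>F. y T))"
    unfolding col_def using step by (simp add: sum_distrib_left)
  also have "\<dots> = (\<Sum>f\<in>I \<rightarrow>\<^sub>E {..<z}. \<Sum>F\<in>Pow ?E. if F \<subseteq> ?G f then (\<Prod>v<z. g (fib f I v)) * (\<Prod>T\<in>F. y T) else 0)"
  proof (rule sum.cong[OF refl])
    fix f assume "f \<in> I \<rightarrow>\<^sub>E {..<z}"
    have sub: "Pow (?G f) \<subseteq> Pow ?E" by auto
    show "(\<Sum>F\<in>Pow (?G f). (\<Prod>v<z. g (fib f I v)) * (\<Prod>T\<in>F. y T)) =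
          (\<Sum>F\<in>Pow ?E. if F \<subseteq> ?G f then (\<Prod>v<z. g (fib f I v)) * (\<Prod>T\<in>F. y T) else 0)"
    proof -
      have e: "Pow (?G f) = {F \<in> Pow ?E. F \<subseteq> ?G f}" by auto
      show ?thesis unfolding e by (rule sum.inter_filter) (use finE in simp)
    qed
  qed
  also have "\<dots> = (\<Sum>F\<in>Pow ?E. \<Sum>f\<in>I \<rightarrow>\<^sub>E {..<z}. if F \<subseteq> ?G f then (\<Prod>v<z. g (fib f I v)) * (\<Prod>T\<in>F. y T) else 0)"
    by (rule sum.swap)
  also have "\<dots> = (\<Sum>F\<in>Pow ?E. (\<Prod>T\<in>F. y T) * col (mF g F) I z)"
  proof (rule sum.cong[OF refl])
    fix F assume F: "F \<in> Pow ?E"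
    show "(\<Sum>f\<in>I \<rightarrow>\<^sub>E {..<z}. if F \<subseteq> ?G f then (\<Prod>v<z. g (fib f I v)) * (\<Prod>T\<in>F. y T) else 0) =
          (\<Prod>T\<in>F. y T) * col (mF g F) I z"
      unfolding col_def sum_distrib_left
    proof (rule sum.cong[OF refl])
      fix f assume f: "f \<in> I \<rightarrow>\<^sub>E {..<z}"
      have "(\<Prod>v<z. mF g F (fib f I v)) =
            (\<Prod>v<z. g (fib f I v)) * (\<Prod>v<z. if \<forall>T\<in>F. T \<subseteq> fib f I v \<or> T \<inter> fib f I v = {} then 1 else 0)"
        unfolding mF_def by (simp add: prod.distrib)
      also have "(\<Prod>v<z. if \<forall>T\<in>F. T \<subseteq> fib f I v \<or> T \<inter> fib f I v = {} then 1 else (0::real)) =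
                 (if F \<subseteq> ?G f then 1 else 0)"
        using compat[OF f] F by (simp add: prod_indicator)
      finally show "(if F \<subseteq> ?G f then (\<Prod>v<z. g (fib f I v)) * (\<Prod>T\<in>F. y T) else 0) =
                    (\<Prod>T\<in>F. y T) * (\<Prod>v<z. mF g F (fib f I v))" by simp
    qed
  qed
  finally show ?thesis .
qed

lemma cum_expand:
  assumes fin: "finite I" and ne: "I \<noteq> {}" and g0: "g {} = 1" and m0: "m {} = 1"
    and m: "\<And>s. s \<subseteq> I \<Longrightarrow> m s = g s * (\<Prod>T\<in>Pow s - {{}}. 1 + y T)"
  shows "coeff (Pol m I) 1 = (\<Sum>F\<in>Pow (Pow I - {{}}). (\<Prod>T\<in>F. y T) * coeff (Pol (mF g F) I) 1)"
proof -
  have mF0: "mF g F {} = 1" for F unfolding mF_def using g0 by simp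
  have "Pol m I = (\<Sum>F\<in>Pow (Pow I - {{}}). smult (\<Prod>T\<in>F. y T) (Pol (mF g F) I))"
  proof (rule poly_eq_nat)
    fix z :: nat
    have "poly (Pol m I) (real z) = col m I z" using col_Pol[of I m z, OF fin m0] .
    also have "\<dots> = (\<Sum>F\<in>Pow (Pow I - {{}}). (\<Prod>T\<in>F. y T) * col (mF g F) I z)"
      by (rule col_expand[OF fin m])
    also have "\<dots> = poly (\<Sum>F\<in>Pow (Pow I - {{}}). smult (\<Prod>T\<in>F. y T) (Pol (mF g F) I)) (real z)"
    proof -
      have cp: "poly (Pol (mF g F) I) (real z) = col (mF g F) I z" for F
        by (rule col_Pol[OF fin]) (rule mF0)
      show ?thesis by (simp add: poly_sum cp)
    qed
    finally show "poly (Pol m I) (real z) = poly (\<Sum>F\<in>Pow (Pow I - {{}}). smult (\<Prod>T\<in>F. y T) (Pol (mF g F) I)) (real z)" .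
  qed
  then show ?thesis by (simp add: coeff_sum)
qed


lemma ln_taylor_bound:
  fixes u :: real
  assumes u: "0 \<le> u" "u \<le> 1/2"
  shows "\<bar>ln (1 - u) + (\<Sum>m\<in>{1..p}. u ^ m / real m)\<bar> \<le> 2 * u ^ (Suc p)"
proof (cases "u = 0")
  case True
  have s0: "(\<Sum>m\<in>{1..p}. u ^ m / real m) = 0"
  proof (intro sum.neutral ballI)
    fix m assume "m \<in> {1..p}"
    then have "m \<noteq> 0" by auto
    then show "u ^ m / real m = 0" using True by simp
  qed
  show ?thesis by (subst s0) (simp add: True)
next
  case False
  then have u0: "0 < u" using u by simp
  define G where "G x = ln (1 - x) + (\<Sum>m\<in>{1..p}. x ^ m / real m)" for x :: real
  define G' where "G' x = - 1 / (1 - x) + (\<Sum>m\<in>{1..p}. x ^ (m - 1))" for x :: real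
  have der: "(G has_real_derivative G' x) (at x)" if "0 \<le> x" "x \<le> u" for x
  proof -
    have x1: "x < 1" using that u by simp
    have d1: "((\<lambda>x. ln (1 - x)) has_real_derivative (- 1 / (1 - x))) (at x)"
      using x1 by (auto intro!: derivative_eq_intros simp: field_simps)
    have d2: "((\<lambda>x. x ^ m / real m) has_real_derivative x ^ (m - 1)) (at x)" if "m \<in> {1..p}" for m
      using that by (auto intro!: derivative_eq_intros simp: field_simps)
    have "((\<lambda>x. \<Sum>m\<in>{1..p}. x ^ m / real m) has_real_derivative (\<Sum>m\<in>{1..p}. x ^ (m - 1))) (at x)"
      by (rule DERIV_sum) (use d2 in auto)
    then show ?thesis unfolding G_def G'_def by (intro DERIV_add d1)
  qed
  obtain \<xi> where xi: "0 < \<xi>" "\<xi> < u" "G u - G 0 = (u - 0) * G' \<xi>"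
    using MVT2[OF u0, of G G'] der by auto
  have s0: "(\<Sum>m\<in>{1..p}. (0::real) ^ m / real m) = 0"
  proof (intro sum.neutral ballI)
    fix m assume "m \<in> {1..p}"
    then have "m \<noteq> 0" by auto
    then show "(0::real) ^ m / real m = 0" by simp
  qed
  have G0: "G 0 = 0" unfolding G_def by (subst s0) simp
  have xi1: "\<xi> \<noteq> 1" "1 - \<xi> > 0" using xi u by auto
  have "(\<Sum>m\<in>{1..p}. \<xi> ^ (m - 1)) = (\<Sum>i<p. \<xi> ^ i)"
  proof -
    have "(\<Sum>m\<in>{1..p}. \<xi> ^ (m - 1)) = (\<Sum>i\<in>{0..<p}. \<xi> ^ i)"
      by (rule sum.reindex_bij_witness[where i="\<lambda>i. Suc i" and j="\<lambda>m. m - 1"]) auto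
    then show ?thesis by (simp add: atLeast0LessThan)
  qed
  also have "\<dots> = (1 - \<xi> ^ p) / (1 - \<xi>)" using sum_gp_strict[of \<xi> p] xi1 by simp
  finally have S: "(\<Sum>m\<in>{1..p}. \<xi> ^ (m - 1)) = (1 - \<xi> ^ p) / (1 - \<xi>)" .
  have "G' \<xi> = (-1 + (1 - \<xi> ^ p)) / (1 - \<xi>)" unfolding G'_def S by (simp only: add_divide_distrib)
  then have "G' \<xi> = - (\<xi> ^ p) / (1 - \<xi>)" by simp
  then have "\<bar>G' \<xi>\<bar> = \<xi> ^ p / (1 - \<xi>)" using xi1 xi by simp
  also have "\<dots> \<le> u ^ p / (1/2)"
    by (intro frac_le power_mono) (use xi u in auto)
  finally have "\<bar>G' \<xi>\<bar> \<le> 2 * u ^ p" by simp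
  then have "\<bar>G u\<bar> \<le> u * (2 * u ^ p)" using xi G0 u0 by (simp add: abs_mult)
  then show ?thesis unfolding G_def by (simp add: algebra_simps)
qed

lemma exp_minus_one_bound:
  fixes u :: real
  assumes "\<bar>u\<bar> \<le> 1/2"
  shows "\<bar>exp u - 1\<bar> \<le> 2 * \<bar>u\<bar>"
proof (cases "u \<ge> 0")
  case True
  have "exp u \<le> 1 + u + u\<^sup>2" by (rule exp_bound) (use True assms in auto)
  moreover have "u\<^sup>2 \<le> u" using True assms mult_right_le_one_le[of u u] by (simp add: power2_eq_square)
  moreover have "1 \<le> exp u" using True by simp
  ultimately show ?thesis using True by simp
next
  case False
  have a: "1 + u \<le> exp u" by (rule exp_ge_add_one_self)
  have b: "exp u \<le> 1" using False by simp
  then have "\<bar>exp u - 1\<bar> = 1 - exp u" by simp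
  then show ?thesis using a False by linarith
qed

lemma split_exists:
  fixes C :: "'c set" and D :: "'t \<Rightarrow> 'c set"
  assumes "finite F" "finite C" "\<forall>T\<in>F. D T \<subseteq> C \<and> D T \<noteq> {}"
    "(\<Sum>T\<in>F. card (D T) - 1) + 1 < card C"
  shows "\<exists>J. J \<subseteq> C \<and> J \<noteq> {} \<and> J \<noteq> C \<and> (\<forall>T\<in>F. D T \<subseteq> J \<or> D T \<inter> J = {})"
  using assms
proof (induction F arbitrary: C D rule: finite_induct)
  case empty
  then have "card C \<ge> 2" by simp
  then obtain c where c: "c \<in> C" by fastforce
  have "{c} \<noteq> C" using \<open>card C \<ge> 2\<close> by auto
  then show ?case using c by (intro exI[of _ "{c}"]) auto
next
  case (insert T F)
  have DT: "D T \<subseteq> C" "D T \<noteq> {}" using insert.prems by auto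
  have finDT: "finite (D T)" using DT insert.prems(1) finite_subset by blast
  have sum_ins: "(\<Sum>U\<in>insert T F. card (D U) - 1) = (card (D T) - 1) + (\<Sum>U\<in>F. card (D U) - 1)"
    using insert.hyps by simp
  show ?case
  proof (cases "card (D T) \<le> 1")
    case True
    have "card (D T) \<noteq> 0" using DT finDT by simp
    then have "card (D T) = 1" using True by linarith
    then obtain d where d: "D T = {d}" by (rule card_1_singletonE)
    have "\<exists>J. J \<subseteq> C \<and> J \<noteq> {} \<and> J \<noteq> C \<and> (\<forall>U\<in>F. D U \<subseteq> J \<or> D U \<inter> J = {})"
      by (rule insert.IH) (use insert.prems sum_ins in auto)
    then obtain J where J: "J \<subseteq> C" "J \<noteq> {}" "J \<noteq> C" "\<forall>U\<in>F. D U \<subseteq> J \<or> D U \<inter> J = {}" by blast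
    have "D T \<subseteq> J \<or> D T \<inter> J = {}" using d by auto
    then show ?thesis using J by (intro exI[of _ J]) auto
  next
    case False
    obtain d0 where d0: "d0 \<in> D T" using DT by auto
    define \<phi> where "\<phi> c = (if c \<in> D T then d0 else c)" for c
    define C' where "C' = \<phi> ` C"
    define D' where "D' U = \<phi> ` D U" for U
    have C'eq: "C' = insert d0 (C - D T)"
      unfolding C'_def \<phi>_def using d0 DT by auto
    have cardC': "card C' = card C - card (D T) + 1"
    proof -
      have "card (C - D T) = card C - card (D T)" using DT insert.prems(1) by (simp add: card_Diff_subset finDT)
      moreover have "d0 \<notin> C - D T" using d0 by auto
      ultimately show ?thesis unfolding C'eq using insert.prems(1) by simp
    qed
    have le: "card (D' U) - 1 \<le> card (D U) - 1" if "U \<in> F" for U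
    proof -
      have "finite (D U)" using insert.prems that finite_subset by blast
      then have "card (D' U) \<le> card (D U)" unfolding D'_def by (rule card_image_le)
      then show ?thesis by simp
    qed
    have cardDT: "card (D T) \<le> card C" using DT insert.prems(1) card_mono by blast
    have "(\<Sum>U\<in>F. card (D' U) - 1) \<le> (\<Sum>U\<in>F. card (D U) - 1)" by (rule sum_mono) (use le in auto)
    then have ineq: "(\<Sum>U\<in>F. card (D' U) - 1) + 1 < card C'"
      using insert.prems(3) sum_ins cardC' False cardDT by linarith
    have "\<exists>J. J \<subseteq> C' \<and> J \<noteq> {} \<and> J \<noteq> C' \<and> (\<forall>U\<in>F. D' U \<subseteq> J \<or> D' U \<inter> J = {})"
    proof (rule insert.IH)
      show "finite C'" unfolding C'_def using insert.prems by simp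
      show "\<forall>U\<in>F. D' U \<subseteq> C' \<and> D' U \<noteq> {}" unfolding D'_def C'_def using insert.prems by auto
      show "(\<Sum>U\<in>F. card (D' U) - 1) + 1 < card C'" by (rule ineq)
    qed
    then obtain J' where J': "J' \<subseteq> C'" "J' \<noteq> {}" "J' \<noteq> C'" "\<forall>U\<in>F. D' U \<subseteq> J' \<or> D' U \<inter> J' = {}"
      by blast
    define J where "J = {c\<in>C. \<phi> c \<in> J'}"
    have "J \<subseteq> C" unfolding J_def by auto
    moreover have "J \<noteq> {}"
    proof -
      obtain c' where "c' \<in> J'" using J' by auto
      then obtain c where "c \<in> C" "\<phi> c = c'" using J'(1) unfolding C'_def by auto
      then show ?thesis unfolding J_def using \<open>c' \<in> J'\<close> by auto
    qed
    moreover have "J \<noteq> C"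
    proof -
      obtain c' where "c' \<in> C'" "c' \<notin> J'" using J'(1,3) by auto
      then obtain c where "c \<in> C" "\<phi> c = c'" unfolding C'_def by auto
      then show ?thesis unfolding J_def using \<open>c' \<notin> J'\<close> by auto
    qed
    moreover have "\<forall>U\<in>insert T F. D U \<subseteq> J \<or> D U \<inter> J = {}"
    proof
      fix U assume U: "U \<in> insert T F"
      have DUC: "D U \<subseteq> C" using insert.prems U by auto
      show "D U \<subseteq> J \<or> D U \<inter> J = {}"
      proof (cases "U = T")
        case True
        have "\<phi> c = d0" if "c \<in> D T" for c using that unfolding \<phi>_def by simp
        then show ?thesis unfolding J_def using True DUC by (cases "d0 \<in> J'") auto
      next
        case False
        then have "U \<in> F" using U by auto
        then have "D' U \<subseteq> J' \<or> D' U \<inter> J' = {}" using J'(4) by auto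
        then show ?thesis unfolding J_def D'_def using DUC by auto
      qed
    qed
    ultimately show ?thesis by blast
  qed
qed

definition psum :: "nat \<Rightarrow> nat \<Rightarrow> real" where
  "psum m k = (\<Sum>j<k. real j ^ m)"

lemma psum_identity:
  "real k ^ Suc m = (\<Sum>i\<le>m. real (Suc m choose i) * psum i k)"
proof -
  have "real k ^ Suc m = (\<Sum>j<k. real (Suc j) ^ Suc m - real j ^ Suc m)"
    using sum_lessThan_telescope[of "\<lambda>j. real j ^ Suc m" k] by simp
  also have "\<dots> = (\<Sum>j<k. \<Sum>i\<le>m. real (Suc m choose i) * real j ^ i)"
  proof (rule sum.cong[OF refl])
    fix j
    have "real (Suc j) ^ Suc m = (real j + 1) ^ Suc m" by (simp add: add.commute)
    also have "\<dots> = (\<Sum>i\<le>Suc m. real (Suc m choose i) * real j ^ i)"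
      unfolding binomial_ring by simp
    also have "\<dots> = (\<Sum>i\<le>m. real (Suc m choose i) * real j ^ i) + real j ^ Suc m"
      by (simp add: atMost_Suc)
    finally show "real (Suc j) ^ Suc m - real j ^ Suc m = (\<Sum>i\<le>m. real (Suc m choose i) * real j ^ i)"
      by simp
  qed
  also have "\<dots> = (\<Sum>i\<le>m. real (Suc m choose i) * psum i k)"
    unfolding psum_def by (simp add: sum.swap[of _ "{..<k}"] sum_distrib_left)
  finally show ?thesis .
qed

lemma Dif_psum:
  assumes "\<And>d. d < t \<Longrightarrow> Dif T (\<lambda>V. real (kk V) ^ d) = 0"
  shows "m + 2 \<le> t \<Longrightarrow> Dif T (\<lambda>V. psum m (kk V)) = 0"
proof (induction m rule: less_induct)
  case (less m)
  have "Dif T (\<lambda>V. real (kk V) ^ Suc m) = 0" by (rule assms) (use less.prems in simp)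
  then have "0 = Dif T (\<lambda>V. real (kk V) ^ Suc m)" by simp
  also have "\<dots> = Dif T (\<lambda>V. \<Sum>i\<le>m. real (Suc m choose i) * psum i (kk V))"
    by (simp only: psum_identity)
  also have "\<dots> = (\<Sum>i\<le>m. real (Suc m choose i) * Dif T (\<lambda>V. psum i (kk V)))"
    by (simp add: Dif_sum Dif_cmult)
  also have "\<dots> = real (Suc m choose m) * Dif T (\<lambda>V. psum m (kk V))"
  proof -
    have "(\<Sum>i<m. real (Suc m choose i) * Dif T (\<lambda>V. psum i (kk V))) = 0"
      using less by (intro sum.neutral) auto
    then show ?thesis by (simp add: lessThan_Suc_atMost[symmetric])
  qed
  finally show ?case by simp
qed


definition pinj :: "(nat \<times> nat) set \<Rightarrow> bool" where
  "pinj S \<longleftrightarrow> inj_on fst S \<and> inj_on snd S"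

definition ext_perms :: "nat \<Rightarrow> (nat \<times> nat) set \<Rightarrow> (nat \<Rightarrow> nat) set" where
  "ext_perms N S = {\<pi>. \<pi> permutes {1..N} \<and> (\<forall>p\<in>S. \<pi> (fst p) = snd p)}"

lemma ext_perms_empty:
  assumes "\<not> pinj S"
  shows "ext_perms N S = {}"
proof (rule ccontr)
  assume "ext_perms N S \<noteq> {}"
  then obtain \<pi> where \<pi>: "\<pi> permutes {1..N}" "\<forall>p\<in>S. \<pi> (fst p) = snd p"
    unfolding ext_perms_def by auto
  have "inj_on fst S"
  proof (rule inj_onI)
    fix p q assume "p \<in> S" "q \<in> S" "fst p = fst q"
    then have "snd p = snd q" using \<pi>(2) by metis
    then show "p = q" using \<open>fst p = fst q\<close> by (simp add: prod_eq_iff)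
  qed
  moreover have "inj_on snd S"
  proof (rule inj_onI)
    fix p q assume "p \<in> S" "q \<in> S" "snd p = snd q"
    then have "\<pi> (fst p) = \<pi> (fst q)" using \<pi>(2) by metis
    then have "fst p = fst q" using permutes_inj[OF \<pi>(1)] by (simp add: inj_eq)
    then show "p = q" using \<open>snd p = snd q\<close> by (simp add: prod_eq_iff)
  qed
  ultimately show False using assms unfolding pinj_def by simp
qed

lemma card_ext_perms:
  assumes fin: "finite S" and sub: "S \<subseteq> {1..N} \<times> {1..N}" and pi: "pinj S"
  shows "card (ext_perms N S) = fact (N - card S)"
proof -
  define A where "A = {1..N}"
  define D where "D = fst ` S"
  define E where "E = snd ` S"
  define h where "h = snd \<circ> the_inv_into S fst"
  have injf: "inj_on fst S" and injs: "inj_on snd S" using pi unfolding pinj_def by auto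
  have hp: "h (fst p) = snd p" if "p \<in> S" for p
    unfolding h_def using the_inv_into_f_f[OF injf that] by simp
  have cardD: "card D = card S" unfolding D_def using card_image[OF injf] .
  have cardE: "card E = card S" unfolding E_def using card_image[OF injs] .
  have DA: "D \<subseteq> A" "E \<subseteq> A" using sub unfolding D_def E_def A_def by auto
  have finA: "finite A" unfolding A_def by simp
  have "card (A - D) = card (A - E)"
    using DA finA cardD cardE by (simp add: card_Diff_subset finite_subset)
  then obtain g where g: "bij_betw g (A - D) (A - E)"
    using finite_same_card_bij[of "A - D" "A - E"] finA by auto
  define \<pi>0 where "\<pi>0 x = (if x \<in> D then h x else if x \<in> A then g x else x)" for x
  have bijh: "bij_betw h D E"
  proof (rule bij_betw_imageI)
    show "inj_on h D"
    proof (rule inj_onI)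
      fix a b assume "a \<in> D" "b \<in> D" "h a = h b"
      then obtain p q where "p \<in> S" "q \<in> S" "a = fst p" "b = fst q" unfolding D_def by auto
      then show "a = b" using \<open>h a = h b\<close> hp injs by (metis inj_onD)
    qed
    show "h ` D = E" unfolding D_def E_def using hp by (force simp: image_iff)
  qed
  have bij0: "bij_betw \<pi>0 A A"
  proof -
    have b1: "bij_betw \<pi>0 D E" using bijh by (rule bij_betw_cong[THEN iffD1, rotated]) (simp add: \<pi>0_def)
    have b2: "bij_betw \<pi>0 (A - D) (A - E)" using g
      by (rule bij_betw_cong[THEN iffD1, rotated]) (simp add: \<pi>0_def)
    have "bij_betw \<pi>0 (D \<union> (A - D)) (E \<union> (A - E))" by (rule bij_betw_combine[OF b1 b2]) auto
    moreover have "D \<union> (A - D) = A" "E \<union> (A - E) = A" using DA by auto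
    ultimately show ?thesis by simp
  qed
  have perm0: "\<pi>0 permutes A"
    by (rule bij_imp_permutes[OF bij0]) (use DA in \<open>auto simp: \<pi>0_def\<close>)
  have eq: "ext_perms N S = (\<lambda>\<rho>. \<pi>0 \<circ> \<rho>) ` {\<rho>. \<rho> permutes (A - D)}"
  proof
    show "(\<lambda>\<rho>. \<pi>0 \<circ> \<rho>) ` {\<rho>. \<rho> permutes (A - D)} \<subseteq> ext_perms N S"
    proof
      fix \<pi> assume "\<pi> \<in> (\<lambda>\<rho>. \<pi>0 \<circ> \<rho>) ` {\<rho>. \<rho> permutes (A - D)}"
      then obtain \<rho> where \<rho>: "\<rho> permutes (A - D)" "\<pi> = \<pi>0 \<circ> \<rho>" by auto
      have "\<rho> permutes A" using permutes_subset[OF \<rho>(1)] by auto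
      then have "\<pi> permutes A" using \<rho>(2) permutes_compose[OF _ perm0] by simp
      moreover have "\<pi> (fst p) = snd p" if "p \<in> S" for p
      proof -
        have "fst p \<in> D" using that unfolding D_def by auto
        then have "\<rho> (fst p) = fst p" using permutes_not_in[OF \<rho>(1)] by auto
        then show ?thesis using \<rho>(2) hp[OF that] \<open>fst p \<in> D\<close> by (simp add: \<pi>0_def)
      qed
      ultimately show "\<pi> \<in> ext_perms N S" unfolding ext_perms_def A_def by auto
    qed
    show "ext_perms N S \<subseteq> (\<lambda>\<rho>. \<pi>0 \<circ> \<rho>) ` {\<rho>. \<rho> permutes (A - D)}"
    proof
      fix \<pi> assume "\<pi> \<in> ext_perms N S"
      then have \<pi>: "\<pi> permutes A" "\<forall>p\<in>S. \<pi> (fst p) = snd p" unfolding ext_perms_def A_def by auto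
      define \<rho> where "\<rho> = inv \<pi>0 \<circ> \<pi>"
      have \<rho>A: "\<rho> permutes A" unfolding \<rho>_def by (rule permutes_compose[OF \<pi>(1) permutes_inv[OF perm0]])
      have fixD: "\<rho> a = a" if aD: "a \<in> D" for a
      proof -
        obtain p where p: "p \<in> S" "a = fst p" using aD unfolding D_def by blast
        have "\<pi> a = \<pi>0 a" using \<pi>(2) p hp aD by (simp add: \<pi>0_def)
        then show ?thesis unfolding \<rho>_def using permutes_inverses(2)[OF perm0] by simp
      qed
      have "\<rho> permutes (A - D)"
        unfolding permutes_def
      proof
        show "\<forall>x. x \<notin> A - D \<longrightarrow> \<rho> x = x"
          using fixD permutes_not_in[OF \<rho>A] by auto
        show "\<forall>y. \<exists>!x. \<rho> x = y" using \<rho>A unfolding permutes_def by blast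
      qed
      moreover have "\<pi> = \<pi>0 \<circ> \<rho>"
        unfolding \<rho>_def by (simp add: o_assoc permutes_inv_o(1)[OF perm0])
      ultimately show "\<pi> \<in> (\<lambda>\<rho>. \<pi>0 \<circ> \<rho>) ` {\<rho>. \<rho> permutes (A - D)}" by auto
    qed
  qed
  have inj: "inj_on (\<lambda>\<rho>. \<pi>0 \<circ> \<rho>) {\<rho>. \<rho> permutes (A - D)}"
  proof (rule inj_onI)
    fix \<rho>1 \<rho>2 assume "\<pi>0 \<circ> \<rho>1 = \<pi>0 \<circ> \<rho>2"
    then show "\<rho>1 = \<rho>2" using permutes_inj[OF perm0] by (simp add: fun_eq_iff inj_eq)
  qed
  have "card (ext_perms N S) = card {\<rho>. \<rho> permutes (A - D)}"
    unfolding eq by (rule card_image[OF inj])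
  also have "\<dots> = fact (card (A - D))" by (rule card_permutations) (use finA in auto)
  also have "card (A - D) = N - card S" using DA finA cardD unfolding A_def
    by (simp add: card_Diff_subset finite_subset)
  finally show ?thesis .
qed

lemma ext_perms_subset: "ext_perms N S \<subseteq> {\<pi>. \<pi> permutes {1..N}}"
  unfolding ext_perms_def by auto

definition ffN :: "nat \<Rightarrow> nat \<Rightarrow> real" where
  "ffN N k = (\<Prod>j<k. real N - real j)"

lemma fact_ffN: "k \<le> N \<Longrightarrow> real (fact N) = real (fact (N - k)) * ffN N k"
proof (induction k)
  case 0
  then show ?case by (simp add: ffN_def)
next
  case (Suc k)
  have e: "N - k = Suc (N - Suc k)" using Suc.prems by simp
  have "real (fact N) = real (fact (N - k)) * ffN N k" using Suc by simp
  also have "real (fact (N - k)) = real (N - k) * real (fact (N - Suc k))"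
    by (simp only: e fact_Suc of_nat_mult of_nat_id)
  also have "real (N - k) = real N - real k" using Suc.prems by simp
  finally show ?case by (simp add: ffN_def algebra_simps)
qed

lemma ffN_pos: "k \<le> N \<Longrightarrow> ffN N k > 0"
  unfolding ffN_def by (intro prod_pos) auto

lemma ffN_lower:
  assumes "2 * k \<le> N"
  shows "ffN N k \<ge> (real N / 2) ^ k"
proof -
  have "(real N / 2) ^ k = (\<Prod>j<k. real N / 2)" by simp
  also have "\<dots> \<le> ffN N k" unfolding ffN_def
    by (rule prod_mono) (use assms in auto)
  finally show ?thesis .
qed


lemma sum_bool_card:
  assumes "finite A"
  shows "(\<Sum>x\<in>A. if Q x then 1 else (0::real)) = real (card {x\<in>A. Q x})"
proof -
  have "(\<Sum>x\<in>A. if Q x then 1 else (0::real)) = (\<Sum>x\<in>{x\<in>A. Q x}. 1)"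
    by (rule sum.inter_filter[symmetric]) (rule assms)
  then show ?thesis by simp
qed

lemma pinj_UN:
  assumes "\<And>c c'. c \<in> C \<Longrightarrow> c' \<in> C \<Longrightarrow> c \<noteq> c' \<Longrightarrow> fst ` S c \<inter> fst ` S c' = {}"
    "\<And>c c'. c \<in> C \<Longrightarrow> c' \<in> C \<Longrightarrow> c \<noteq> c' \<Longrightarrow> snd ` S c \<inter> snd ` S c' = {}"
  shows "pinj (\<Union>c\<in>C. S c) \<longleftrightarrow> (\<forall>c\<in>C. pinj (S c))"
proof
  assume "pinj (\<Union>c\<in>C. S c)"
  then show "\<forall>c\<in>C. pinj (S c)" unfolding pinj_def by (auto intro: inj_on_subset)
next
  assume a: "\<forall>c\<in>C. pinj (S c)"
  have "inj_on fst (\<Union>c\<in>C. S c)"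
  proof (rule inj_onI)
    fix p q assume p: "p \<in> (\<Union>c\<in>C. S c)" and q: "q \<in> (\<Union>c\<in>C. S c)" and e: "fst p = fst q"
    from p obtain c where c: "c \<in> C" "p \<in> S c" by auto
    from q obtain c' where c': "c' \<in> C" "q \<in> S c'" by auto
    have "c = c'"
    proof (rule ccontr)
      assume "c \<noteq> c'"
      then have d: "fst ` S c \<inter> fst ` S c' = {}" using assms(1) c c' by auto
      have "fst p \<in> fst ` S c" by (rule imageI[OF c(2)])
      moreover have "fst p \<in> fst ` S c'" unfolding e by (rule imageI[OF c'(2)])
      ultimately have "fst p \<in> fst ` S c \<inter> fst ` S c'" by simp
      then show False using d by auto
    qed
    have "inj_on fst (S c)" using a c(1) unfolding pinj_def by auto
    then show "p = q" using c(2) c'(2) \<open>c = c'\<close> e by (auto dest: inj_onD)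
  qed
  moreover have "inj_on snd (\<Union>c\<in>C. S c)"
  proof (rule inj_onI)
    fix p q assume p: "p \<in> (\<Union>c\<in>C. S c)" and q: "q \<in> (\<Union>c\<in>C. S c)" and e: "snd p = snd q"
    from p obtain c where c: "c \<in> C" "p \<in> S c" by auto
    from q obtain c' where c': "c' \<in> C" "q \<in> S c'" by auto
    have "c = c'"
    proof (rule ccontr)
      assume "c \<noteq> c'"
      then have d: "snd ` S c \<inter> snd ` S c' = {}" using assms(2) c c' by auto
      have "snd p \<in> snd ` S c" by (rule imageI[OF c(2)])
      moreover have "snd p \<in> snd ` S c'" unfolding e by (rule imageI[OF c'(2)])
      ultimately have "snd p \<in> snd ` S c \<inter> snd ` S c'" by simp
      then show False using d by auto
    qed
    have "inj_on snd (S c)" using a c(1) unfolding pinj_def by auto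
    then show "p = q" using c(2) c'(2) \<open>c = c'\<close> e by (auto dest: inj_onD)
  qed
  ultimately show "pinj (\<Union>c\<in>C. S c)" unfolding pinj_def by simp
qed

locale cumsetup =
  fixes r :: nat and l :: "nat \<Rightarrow> nat" and \<alpha> \<beta> :: "nat \<Rightarrow> nat \<Rightarrow> nat" and N :: nat
  assumes rng: "\<forall>i\<in>{1..r}. \<forall>j\<in>{1..l i}. \<alpha> i j \<in> {1..N} \<and> \<beta> i j \<in> {1..N}"
begin

definition SP :: "nat set \<Rightarrow> (nat \<times> nat) set" where
  "SP V = (\<Union>i\<in>V. (\<lambda>j. (\<alpha> i j, \<beta> i j)) ` {1..l i})"

definition kk :: "nat set \<Rightarrow> nat" where
  "kk V = card (SP V)"

definition mom :: "nat set \<Rightarrow> real" where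
  "mom V = integral\<^sup>L (unif_perm N) (\<lambda>\<pi>. \<Prod>i\<in>V. match_indicator l \<alpha> \<beta> i \<pi>)"

definition rho :: "(nat \<times> nat) set" where
  "rho = (dep_edges r l \<alpha> \<beta> \<union> Id_on {1..r})\<^sup>*"

definition CC :: "nat set set" where
  "CC = {1..r} // rho"

definition LL :: nat where
  "LL = (\<Sum>i\<in>{1..r}. l i)"

lemma finite_SP: "finite V \<Longrightarrow> finite (SP V)"
  unfolding SP_def by auto

lemma SP_sub: "V \<subseteq> {1..r} \<Longrightarrow> SP V \<subseteq> {1..N} \<times> {1..N}"
  unfolding SP_def using rng by auto

lemma SP_mono: "V \<subseteq> W \<Longrightarrow> SP V \<subseteq> SP W"
  unfolding SP_def by auto

lemma kk_le_LL:
  assumes "V \<subseteq> {1..r}"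
  shows "kk V \<le> LL"
proof -
  have "kk V \<le> kk {1..r}" unfolding kk_def
    by (rule card_mono) (use finite_SP SP_mono assms in auto)
  also have "\<dots> \<le> (\<Sum>i\<in>{1..r}. card ((\<lambda>j. (\<alpha> i j, \<beta> i j)) ` {1..l i}))"
    unfolding kk_def SP_def by (rule card_UN_le) simp
  also have "\<dots> \<le> LL" unfolding LL_def
  proof (rule sum_mono)
    fix i
    have "card ((\<lambda>j. (\<alpha> i j, \<beta> i j)) ` {1..l i}) \<le> card {1..l i}" by (rule card_image_le) simp
    then show "card ((\<lambda>j. (\<alpha> i j, \<beta> i j)) ` {1..l i}) \<le> l i" by simp
  qed
  finally show ?thesis .
qed

lemma prod_match:
  assumes "finite V"
  shows "(\<Prod>i\<in>V. match_indicator l \<alpha> \<beta> i \<pi>) = (if \<forall>p\<in>SP V. \<pi> (fst p) = snd p then 1 else 0)"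
proof -
  have "(\<Prod>i\<in>V. match_indicator l \<alpha> \<beta> i \<pi>) =
        (\<Prod>i\<in>V. if \<forall>j\<in>{1..l i}. \<pi> (\<alpha> i j) = \<beta> i j then 1 else 0)"
    unfolding match_indicator_def by (intro prod.cong refl) (simp add: prod_indicator)
  also have "\<dots> = (if \<forall>i\<in>V. \<forall>j\<in>{1..l i}. \<pi> (\<alpha> i j) = \<beta> i j then 1 else 0)"
    using assms by (simp add: prod_indicator)
  also have "(\<forall>i\<in>V. \<forall>j\<in>{1..l i}. \<pi> (\<alpha> i j) = \<beta> i j) = (\<forall>p\<in>SP V. \<pi> (fst p) = snd p)"
    unfolding SP_def by auto
  finally show ?thesis .
qed

lemma mom_card:
  assumes "finite V"
  shows "mom V = real (card (ext_perms N (SP V))) / fact N"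
proof -
  let ?P = "{\<pi>. \<pi> permutes {1..N}}"
  have fin: "finite ?P" by (rule finite_permutations) simp
  have ne: "?P \<noteq> {}" using permutes_id by blast
  have cardP: "card ?P = fact N" using card_permutations[of "{1..N}" N] by simp
  have "mom V = (\<Sum>\<pi>\<in>?P. if \<forall>p\<in>SP V. \<pi> (fst p) = snd p then 1 else 0) / real (card ?P)"
    unfolding mom_def unif_perm_def using integral_pmf_of_set[OF ne fin] prod_match[OF assms] by simp
  also have "(\<Sum>\<pi>\<in>?P. if \<forall>p\<in>SP V. \<pi> (fst p) = snd p then 1 else 0) = real (card (ext_perms N (SP V)))"
    unfolding sum_bool_card[OF fin] ext_perms_def by simp
  finally show ?thesis using cardP by simp
qed

lemma mom_nonneg: "finite V \<Longrightarrow> 0 \<le> mom V"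
  using mom_card by simp

lemma mom_le1: "finite V \<Longrightarrow> mom V \<le> 1"
proof -
  assume fV: "finite V"
  have "card (ext_perms N (SP V)) \<le> card {\<pi>. \<pi> permutes {1..N}}"
    by (rule card_mono[OF _ ext_perms_subset]) (rule finite_permutations, simp)
  also have "\<dots> = fact N" using card_permutations[of "{1..N}" N] by simp
  finally have "real (card (ext_perms N (SP V))) \<le> real (fact N)" by linarith
  then show ?thesis using mom_card[OF fV] by (simp add: divide_le_eq_1)
qed

lemma mom_exact:
  assumes V: "V \<subseteq> {1..r}" and kN: "kk V \<le> N"
  shows "mom V = (if pinj (SP V) then 1 / ffN N (kk V) else 0)"
proof -
  have fV: "finite V" by (rule finite_subset[OF V]) simp
  show ?thesis
  proof (cases "pinj (SP V)")
    case True
    have "card (ext_perms N (SP V)) = fact (N - kk V)"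
      unfolding kk_def by (rule card_ext_perms[OF finite_SP[OF fV] SP_sub[OF V] True])
    moreover have "real (fact N) = real (fact (N - kk V)) * ffN N (kk V)" by (rule fact_ffN[OF kN])
    moreover have "real (fact (N - kk V)) > 0" by simp
    ultimately show ?thesis using True mom_card[OF fV] by simp
  next
    case False
    then show ?thesis using mom_card[OF fV] ext_perms_empty[OF False] by simp
  qed
qed

lemma mom_empty: "mom {} = 1"
proof -
  have "kk {} = 0" unfolding kk_def SP_def by simp
  moreover have "pinj (SP {})" unfolding SP_def pinj_def by simp
  ultimately show ?thesis using mom_exact[of "{}"] by (simp add: ffN_def)
qed

lemma dep_sub: "dep_edges r l \<alpha> \<beta> \<subseteq> {1..r} \<times> {1..r}"
  unfolding dep_edges_def by auto

lemma rho_closed: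
  assumes "(i, x) \<in> rho" "i \<in> {1..r}"
  shows "x \<in> {1..r}"
  using assms(1,2) unfolding rho_def
proof (induction rule: rtrancl_induct)
  case base
  then show ?case .
next
  case (step y z)
  then show ?case using dep_sub by auto
qed

definition rho' :: "(nat \<times> nat) set" where
  "rho' = rho \<inter> {1..r} \<times> {1..r}"

lemma equiv_rho': "equiv {1..r} rho'"
proof -
  have "sym (dep_edges r l \<alpha> \<beta> \<union> Id_on {1..r})"
    unfolding sym_def dep_edges_def by auto
  then have s: "sym rho" unfolding rho_def by (rule sym_rtrancl)
  have t: "trans rho" unfolding rho_def by (rule trans_rtrancl)
  have a: "rho' \<subseteq> {1..r} \<times> {1..r}" unfolding rho'_def by auto
  have b: "refl_on {1..r} rho'" unfolding refl_on_def rho'_def rho_def by auto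
  have c: "sym rho'" using s unfolding rho'_def sym_def by blast
  have d: "trans rho'" using t unfolding rho'_def trans_def by blast
  show ?thesis unfolding equiv_def using a b c d by blast
qed

lemma CC_eq: "CC = {1..r} // rho'"
proof -
  have "rho `` {i} = rho' `` {i}" if "i \<in> {1..r}" for i
    unfolding rho'_def using rho_closed that by auto
  then show ?thesis unfolding CC_def quotient_def by auto
qed

lemma CC_partition: "partition_on {1..r} CC"
  unfolding CC_eq by (rule partition_on_quotient[OF equiv_rho'])

lemma finite_CC: "finite CC"
  using finite_elements[OF _ CC_partition] by simp

lemma CC_disj: "c \<in> CC \<Longrightarrow> c' \<in> CC \<Longrightarrow> c \<noteq> c' \<Longrightarrow> c \<inter> c' = {}"
  using quotient_disj[OF equiv_rho'] unfolding CC_eq by blast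

lemma CC_sub: "c \<in> CC \<Longrightarrow> c \<subseteq> {1..r}"
  using CC_partition partition_onD1 by blast

lemma CC_ne: "c \<in> CC \<Longrightarrow> c \<noteq> {}"
  using CC_partition partition_onD3 by blast

lemma CC_Union: "\<Union>CC = {1..r}"
  using CC_partition partition_onD1 by blast

lemma CC_cross:
  assumes "c \<in> CC" "c' \<in> CC" "i \<in> c" "i' \<in> c'" "(i, i') \<in> dep_edges r l \<alpha> \<beta>"
  shows "c = c'"
proof -
  from assms(1) obtain i0 where i0: "c = rho' `` {i0}" "i0 \<in> {1..r}"
    unfolding CC_eq by (rule quotientE)
  have "(i0, i) \<in> rho'" using assms(3) i0 by simp
  moreover have "(i, i') \<in> rho'" using assms(5) dep_sub unfolding rho'_def rho_def by auto
  ultimately have "(i0, i') \<in> rho'" using equiv_rho' unfolding equiv_def trans_def by blast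
  then have "i' \<in> c \<inter> c'" using i0 assms(4) by simp
  then have "c \<inter> c' \<noteq> {}" by auto
  then show ?thesis using CC_disj[OF assms(1,2)] by auto
qed

lemma card_CC_le: "card CC \<le> r"
proof -
  have "card CC \<le> (\<Sum>c\<in>CC. card c)"
  proof -
    have "(\<Sum>c\<in>CC. 1) \<le> (\<Sum>c\<in>CC. card c)"
    proof (rule sum_mono)
      fix c assume c: "c \<in> CC"
      have "finite c" by (rule finite_subset[OF CC_sub[OF c]]) simp
      then show "1 \<le> card c" using CC_ne[OF c] by (simp add: Suc_leI card_gt_0_iff)
    qed
    then show ?thesis by simp
  qed
  also have "\<dots> = card (\<Union>CC)"
  proof (rule card_Union_disjoint[symmetric])
    show "pairwise disjnt CC" using CC_disj unfolding pairwise_def disjnt_def by blast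
    show "\<And>c. c \<in> CC \<Longrightarrow> finite c"
    proof -
      fix c assume c: "c \<in> CC"
      show "finite c" by (rule finite_subset[OF CC_sub[OF c]]) simp
    qed
  qed
  also have "\<dots> = r" using CC_Union by simp
  finally show ?thesis .
qed

lemma SP_decomp:
  assumes "V \<subseteq> {1..r}"
  shows "SP V = (\<Union>c\<in>CC. SP (V \<inter> c))"
proof
  show "SP V \<subseteq> (\<Union>c\<in>CC. SP (V \<inter> c))"
  proof
    fix p assume "p \<in> SP V"
    then obtain i where i: "i \<in> V" "p \<in> (\<lambda>j. (\<alpha> i j, \<beta> i j)) ` {1..l i}" unfolding SP_def by blast
    have "i \<in> \<Union>CC" using CC_Union assms i(1) by auto
    then obtain c where c: "c \<in> CC" "i \<in> c" by blast
    have "p \<in> SP (V \<inter> c)" unfolding SP_def using i c by blast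
    then show "p \<in> (\<Union>c\<in>CC. SP (V \<inter> c))" using c by blast
  qed
  show "(\<Union>c\<in>CC. SP (V \<inter> c)) \<subseteq> SP V" using SP_mono by blast
qed

lemma fst_SP: "fst ` SP W = (\<Union>i\<in>W. \<alpha> i ` {1..l i})"
  unfolding SP_def by force

lemma snd_SP: "snd ` SP W = (\<Union>i\<in>W. \<beta> i ` {1..l i})"
  unfolding SP_def by force

lemma SP_fst_disj:
  assumes "c \<in> CC" "c' \<in> CC" "c \<noteq> c'"
  shows "fst ` SP (V \<inter> c) \<inter> fst ` SP (V \<inter> c') = {}"
proof (rule ccontr)
  assume "fst ` SP (V \<inter> c) \<inter> fst ` SP (V \<inter> c') \<noteq> {}"
  then obtain x where x: "x \<in> fst ` SP (V \<inter> c)" "x \<in> fst ` SP (V \<inter> c')" by blast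
  from x(1) obtain i where i: "i \<in> V \<inter> c" "x \<in> \<alpha> i ` {1..l i}" unfolding fst_SP by blast
  from x(2) obtain i' where i': "i' \<in> V \<inter> c'" "x \<in> \<alpha> i' ` {1..l i'}" unfolding fst_SP by blast
  have ii: "i \<in> V \<inter> c" "i' \<in> V \<inter> c'" "\<alpha> i ` {1..l i} \<inter> \<alpha> i' ` {1..l i'} \<noteq> {}"
    using i i' by blast+
  have "i \<in> {1..r}" "i' \<in> {1..r}" using CC_sub[OF assms(1)] CC_sub[OF assms(2)] ii by auto
  then have "(i, i') \<in> dep_edges r l \<alpha> \<beta>"
    unfolding dep_edges_def using ii(3) by auto
  then show False using CC_cross[OF assms(1,2)] ii assms(3) by blast
qed

lemma SP_snd_disj:
  assumes "c \<in> CC" "c' \<in> CC" "c \<noteq> c'"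
  shows "snd ` SP (V \<inter> c) \<inter> snd ` SP (V \<inter> c') = {}"
proof (rule ccontr)
  assume "snd ` SP (V \<inter> c) \<inter> snd ` SP (V \<inter> c') \<noteq> {}"
  then obtain x where x: "x \<in> snd ` SP (V \<inter> c)" "x \<in> snd ` SP (V \<inter> c')" by blast
  from x(1) obtain i where i: "i \<in> V \<inter> c" "x \<in> \<beta> i ` {1..l i}" unfolding snd_SP by blast
  from x(2) obtain i' where i': "i' \<in> V \<inter> c'" "x \<in> \<beta> i' ` {1..l i'}" unfolding snd_SP by blast
  have ii: "i \<in> V \<inter> c" "i' \<in> V \<inter> c'" "\<beta> i ` {1..l i} \<inter> \<beta> i' ` {1..l i'} \<noteq> {}"
    using i i' by blast+
  have "i \<in> {1..r}" "i' \<in> {1..r}" using CC_sub[OF assms(1)] CC_sub[OF assms(2)] ii by auto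
  then have "(i, i') \<in> dep_edges r l \<alpha> \<beta>"
    unfolding dep_edges_def using ii(3) by auto
  then show False using CC_cross[OF assms(1,2)] ii assms(3) by blast
qed

lemma kk_decomp:
  assumes V: "V \<subseteq> {1..r}"
  shows "kk V = (\<Sum>c\<in>CC. kk (V \<inter> c))"
proof -
  have fV: "finite V" by (rule finite_subset[OF V]) simp
  have "kk V = card (\<Union>c\<in>CC. SP (V \<inter> c))" unfolding kk_def using SP_decomp[OF V] by simp
  also have "\<dots> = (\<Sum>c\<in>CC. card (SP (V \<inter> c)))"
  proof (rule card_UN_disjoint[OF finite_CC])
    show "\<forall>c\<in>CC. finite (SP (V \<inter> c))" using fV finite_SP by auto
    show "\<forall>c\<in>CC. \<forall>c'\<in>CC. c \<noteq> c' \<longrightarrow> SP (V \<inter> c) \<inter> SP (V \<inter> c') = {}"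
      using SP_fst_disj by blast
  qed
  finally show ?thesis unfolding kk_def .
qed

lemma pinj_decomp:
  assumes V: "V \<subseteq> {1..r}"
  shows "pinj (SP V) \<longleftrightarrow> (\<forall>c\<in>CC. pinj (SP (V \<inter> c)))"
  unfolding SP_decomp[OF V] by (rule pinj_UN) (use SP_fst_disj SP_snd_disj in auto)

end


context cumsetup
begin

definition mt :: "nat set \<Rightarrow> real" where
  "mt V = (\<Prod>c\<in>CC. mom (V \<inter> c))"

definition RR :: "nat set \<Rightarrow> real" where
  "RR V = (\<Prod>c\<in>CC. ffN N (kk (V \<inter> c))) / ffN N (kk V)"

definition phi :: "nat set \<Rightarrow> real" where
  "phi T = Dif T (\<lambda>V. ln (RR V))"

definition yy :: "nat set \<Rightarrow> real" where
  "yy T = exp (phi T) - 1"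

definition tt :: "nat set \<Rightarrow> nat" where
  "tt T = card {c\<in>CC. c \<inter> T \<noteq> {}}"

lemma kk_empty: "kk {} = 0"
  unfolding kk_def SP_def by simp

lemma mt_empty: "mt {} = 1"
  unfolding mt_def using mom_empty by simp

lemma kk_pow_Dif:
  assumes T: "T \<subseteq> {1..r}" and d: "d < tt T"
  shows "Dif T (\<lambda>V. real (kk V) ^ d) = 0"
proof -
  have finT: "finite T" by (rule finite_subset[OF T]) simp
  let ?P = "{..<d} \<rightarrow>\<^sub>E CC"
  have expand: "real (kk V) ^ d = (\<Sum>f\<in>?P. \<Prod>i<d. real (kk (V \<inter> f i)))" if V: "V \<subseteq> T" for V
  proof -
    have "real (kk V) = (\<Sum>c\<in>CC. real (kk (V \<inter> c)))"
      using kk_decomp[of V] V T by simp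
    then have "real (kk V) ^ d = (\<Prod>i<d. \<Sum>c\<in>CC. real (kk (V \<inter> c)))" by simp
    also have "\<dots> = (\<Sum>f\<in>?P. \<Prod>i<d. real (kk (V \<inter> f i)))"
      by (rule prod_sum_PiE) (use finite_CC in auto)
    finally show ?thesis .
  qed
  have "Dif T (\<lambda>V. real (kk V) ^ d) = Dif T (\<lambda>V. \<Sum>f\<in>?P. \<Prod>i<d. real (kk (V \<inter> f i)))"
    by (rule Dif_cong) (rule expand)
  also have "\<dots> = (\<Sum>f\<in>?P. Dif T (\<lambda>V. \<Prod>i<d. real (kk (V \<inter> f i))))"
    by (rule Dif_sum)
  also have "\<dots> = 0"
  proof (rule sum.neutral, rule ballI)
    fix f assume f: "f \<in> ?P"
    define W where "W = \<Union>(f ` {..<d})"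
    show "Dif T (\<lambda>V. \<Prod>i<d. real (kk (V \<inter> f i))) = 0"
    proof (rule Dif_support[OF finT, where W=W])
      fix V assume "V \<subseteq> T"
      have "V \<inter> W \<inter> f i = V \<inter> f i" if "i < d" for i
        unfolding W_def using that by auto
      then show "(\<Prod>i<d. real (kk (V \<inter> f i))) = (\<Prod>i<d. real (kk (V \<inter> W \<inter> f i)))"
        by (intro prod.cong refl) auto
    next
      let ?D = "{c\<in>CC. c \<inter> T \<noteq> {}}"
      have "\<not> ?D \<subseteq> f ` {..<d}"
      proof
        assume "?D \<subseteq> f ` {..<d}"
        then have "card ?D \<le> card (f ` {..<d})" by (rule card_mono[rotated]) simp
        also have "\<dots> \<le> d" using card_image_le[of "{..<d}" f] by simp
        finally show False using d unfolding tt_def by simp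
      qed
      then obtain c0 where c0: "c0 \<in> CC" "c0 \<inter> T \<noteq> {}" "c0 \<notin> f ` {..<d}" by blast
      then obtain x0 where x0: "x0 \<in> c0" "x0 \<in> T" by blast
      have "x0 \<notin> W"
      proof
        assume "x0 \<in> W"
        then obtain i where i: "i < d" "x0 \<in> f i" unfolding W_def by auto
        have "f i \<in> CC" using f i(1) by auto
        then have "f i = c0" using CC_disj[OF _ c0(1)] i(2) x0(1) by blast
        then show False using c0(3) i(1) by auto
      qed
      then show "T - W \<noteq> {}" using x0 by auto
    qed
  qed
  finally show ?thesis .
qed

end

locale cumbig = cumsetup +
  assumes big: "2 ^ (r + 2) * LL ^ 2 + 2 * LL + 2 \<le> N"
begin

lemma N_pos: "N \<ge> 1" using big by simp

lemma kk_le_N: "V \<subseteq> {1..r} \<Longrightarrow> 2 * kk V \<le> N"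
  using kk_le_LL[of V] big by linarith

lemma ffN_kk_pos: "V \<subseteq> {1..r} \<Longrightarrow> ffN N (kk V) > 0"
  using kk_le_N[of V] by (intro ffN_pos) linarith

lemma mom_fact:
  assumes V: "V \<subseteq> {1..r}"
  shows "mom V = mt V * RR V"
proof -
  have Vc: "V \<inter> c \<subseteq> {1..r}" for c using V by auto
  have ex: "mom W = (if pinj (SP W) then 1 / ffN N (kk W) else 0)" if "W \<subseteq> {1..r}" for W
    using mom_exact[OF that] kk_le_N[OF that] by linarith
  show ?thesis
  proof (cases "pinj (SP V)")
    case True
    then have all: "\<forall>c\<in>CC. pinj (SP (V \<inter> c))" using pinj_decomp[OF V] by simp
    have "mt V = (\<Prod>c\<in>CC. 1 / ffN N (kk (V \<inter> c)))"
      unfolding mt_def using all ex[OF Vc] by (intro prod.cong refl) auto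
    also have "\<dots> = 1 / (\<Prod>c\<in>CC. ffN N (kk (V \<inter> c)))" by (simp add: prod_dividef)
    finally have "mt V * RR V = 1 / ffN N (kk V)"
      unfolding RR_def using ffN_kk_pos[OF Vc] finite_CC
      by (simp add: prod_pos less_imp_neq[symmetric] )
    then show ?thesis using ex[OF V] True by simp
  next
    case False
    then obtain c where c: "c \<in> CC" "\<not> pinj (SP (V \<inter> c))" using pinj_decomp[OF V] by auto
    have "mt V = 0" unfolding mt_def
      by (rule prod_zero) (use c finite_CC ex[OF Vc] in auto)
    then show ?thesis using ex[OF V] False by simp
  qed
qed

lemma RR_pos: "V \<subseteq> {1..r} \<Longrightarrow> RR V > 0"
  unfolding RR_def using ffN_kk_pos[of V] ffN_kk_pos[of "V \<inter> _"]
  by (intro divide_pos_pos prod_pos) auto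

lemma RR_empty: "RR {} = 1"
  unfolding RR_def by (simp add: kk_empty ffN_def)

lemma RR_one:
  assumes c0: "c0 \<in> CC" and V: "V \<subseteq> c0"
  shows "RR V = 1"
proof -
  have V': "V \<subseteq> {1..r}" using V CC_sub[OF c0] by auto
  have "(\<Prod>c\<in>CC. ffN N (kk (V \<inter> c))) = ffN N (kk (V \<inter> c0)) * (\<Prod>c\<in>CC - {c0}. ffN N (kk (V \<inter> c)))"
    using finite_CC c0 by (simp add: prod.remove)
  also have "(\<Prod>c\<in>CC - {c0}. ffN N (kk (V \<inter> c))) = 1"
  proof (rule prod.neutral, rule ballI)
    fix c assume "c \<in> CC - {c0}"
    then have "V \<inter> c = {}" using CC_disj[OF _ c0, of c] V by auto
    then show "ffN N (kk (V \<inter> c)) = 1" by (simp add: kk_empty ffN_def)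
  qed
  also have "V \<inter> c0 = V" using V by auto
  finally show ?thesis unfolding RR_def using ffN_kk_pos[OF V'] by simp
qed

lemma mom_expand:
  assumes s: "s \<subseteq> {1..r}"
  shows "mom s = mt s * (\<Prod>T\<in>Pow s - {{}}. 1 + yy T)"
proof -
  have fin: "finite s" by (rule finite_subset[OF s]) simp
  have "RR s = exp (ln (RR s))" using RR_pos[OF s] by simp
  also have "ln (RR s) = (\<Sum>T\<in>Pow s. phi T)" unfolding phi_def by (rule mobius[OF fin, symmetric])
  also have "exp (\<Sum>T\<in>Pow s. phi T) = (\<Prod>T\<in>Pow s. exp (phi T))" by (rule exp_sum) (use fin in simp)
  also have "\<dots> = exp (phi {}) * (\<Prod>T\<in>Pow s - {{}}. exp (phi T))"
    by (rule prod.remove) (use fin in auto)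
  also have "phi {} = 0" unfolding phi_def Dif_def using RR_empty by simp
  also have "(\<Prod>T\<in>Pow s - {{}}. exp (phi T)) = (\<Prod>T\<in>Pow s - {{}}. 1 + yy T)"
    unfolding yy_def by simp
  finally show ?thesis using mom_fact[OF s] by simp
qed

end


context cumbig
begin

lemma ffN_kk_pos_int: "V \<subseteq> {1..r} \<Longrightarrow> ffN N (kk (V \<inter> c)) > 0"
  by (rule ffN_kk_pos) auto

lemma tt_pos:
  assumes T: "T \<subseteq> {1..r}" "T \<noteq> {}"
  shows "tt T \<ge> 1"
proof -
  obtain x where x: "x \<in> T" using T by auto
  then have "x \<in> \<Union>CC" using T CC_Union by auto
  then obtain c where c: "c \<in> CC" "x \<in> c" by auto
  then have "c \<in> {c\<in>CC. c \<inter> T \<noteq> {}}" using x by auto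
  moreover have "finite {c\<in>CC. c \<inter> T \<noteq> {}}" using finite_CC by simp
  ultimately show ?thesis unfolding tt_def by (metis One_nat_def Suc_leI card_gt_0_iff empty_iff)
qed

lemma phi_one:
  assumes T: "T \<subseteq> {1..r}" "T \<noteq> {}" and t1: "tt T \<le> 1"
  shows "phi T = 0"
proof -
  have "tt T = 1" using tt_pos[OF T] t1 by simp
  then obtain c0 where c0: "{c\<in>CC. c \<inter> T \<noteq> {}} = {c0}" unfolding tt_def by (rule card_1_singletonE)
  then have c0C: "c0 \<in> CC" by auto
  have "T \<subseteq> c0"
  proof
    fix x assume x: "x \<in> T"
    then have "x \<in> \<Union>CC" using T CC_Union by auto
    then obtain c where c: "c \<in> CC" "x \<in> c" by auto
    then have "c \<in> {c\<in>CC. c \<inter> T \<noteq> {}}" using x by auto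
    then show "x \<in> c0" using c0 c by auto
  qed
  have "phi T = Dif T (\<lambda>V. 0)" unfolding phi_def
    by (rule Dif_cong) (use RR_one[OF c0C] \<open>T \<subseteq> c0\<close> in auto)
  also have "\<dots> = 0" unfolding Dif_def by simp
  finally show ?thesis .
qed

lemma ln_ffN:
  assumes "2 * k \<le> N"
  shows "ln (ffN N k) = ln (real N) * psum 0 k + (\<Sum>j<k. ln (1 - real j / real N))"
proof -
  have Npos: "real N > 0" using N_pos by simp
  have "ln (ffN N k) = (\<Sum>j<k. ln (real N - real j))"
    unfolding ffN_def by (rule ln_prod) (use assms in auto)
  also have "\<dots> = (\<Sum>j<k. ln (real N) + ln (1 - real j / real N))"
  proof (rule sum.cong[OF refl])
    fix j assume "j \<in> {..<k}"
    then have jN: "real j < real N" using assms by simp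
    have "real N - real j = real N * (1 - real j / real N)" using Npos by (simp add: field_simps)
    moreover have "1 - real j / real N > 0" using jN Npos by simp
    ultimately show "ln (real N - real j) = ln (real N) + ln (1 - real j / real N)"
      using Npos by (simp add: ln_mult)
  qed
  also have "\<dots> = ln (real N) * psum 0 k + (\<Sum>j<k. ln (1 - real j / real N))"
    unfolding psum_def by (simp add: sum.distrib)
  finally show ?thesis .
qed

definition rho_t :: "nat \<Rightarrow> real \<Rightarrow> real" where
  "rho_t p u = ln (1 - u) + (\<Sum>m\<in>{1..p}. u ^ m / real m)"

lemma ln_ffN_expand:
  assumes "2 * k \<le> N"
  shows "ln (ffN N k) = ln (real N) * psum 0 k - (\<Sum>m\<in>{1..p}. (1 / real N) ^ m / real m * psum m k)
           + (\<Sum>j<k. rho_t p (real j / real N))"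
proof -
  have "(\<Sum>j<k. ln (1 - real j / real N)) =
        (\<Sum>j<k. rho_t p (real j / real N) - (\<Sum>m\<in>{1..p}. (real j / real N) ^ m / real m))"
    unfolding rho_t_def by simp
  also have "\<dots> = (\<Sum>j<k. rho_t p (real j / real N)) - (\<Sum>j<k. \<Sum>m\<in>{1..p}. (real j / real N) ^ m / real m)"
    by (simp add: sum_subtractf)
  also have "(\<Sum>j<k. \<Sum>m\<in>{1..p}. (real j / real N) ^ m / real m) = (\<Sum>m\<in>{1..p}. \<Sum>j<k. (real j / real N) ^ m / real m)"
    by (rule sum.swap)
  also have "(\<Sum>m\<in>{1..p}. \<Sum>j<k. (real j / real N) ^ m / real m) =
             (\<Sum>m\<in>{1..p}. (1 / real N) ^ m / real m * psum m k)"
    unfolding psum_def by (intro sum.cong refl) (simp add: sum_distrib_left sum_divide_distrib power_divide)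
  finally show ?thesis using ln_ffN[OF assms] by simp
qed

lemma phi_bound:
  assumes T: "T \<subseteq> {1..r}" "T \<noteq> {}" and t2: "tt T \<ge> 2"
  shows "\<bar>phi T\<bar> \<le> 2 ^ card T * (2 * real LL) * (real LL / real N) ^ (tt T - 1)"
proof -
  have finT: "finite T" by (rule finite_subset[OF T(1)]) simp
  have VI: "V \<subseteq> {1..r}" if "V \<subseteq> T" for V using that T by auto
  define p where "p = tt T - 2"
  have tp: "tt T - 1 = Suc p" using t2 unfolding p_def by simp
  have Npos: "real N > 0" using N_pos by simp
  have lnRR: "ln (RR V) = (\<Sum>c\<in>CC. ln (ffN N (kk (V \<inter> c)))) - ln (ffN N (kk V))" if "V \<subseteq> T" for V
  proof -
    have p1: "(\<Prod>c\<in>CC. ffN N (kk (V \<inter> c))) > 0"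
      using ffN_kk_pos_int[OF VI[OF that]] by (intro prod_pos) auto
    have p2: "ffN N (kk V) > 0" using ffN_kk_pos VI[OF that] by auto
    have "ln (RR V) = ln (\<Prod>c\<in>CC. ffN N (kk (V \<inter> c))) - ln (ffN N (kk V))"
      unfolding RR_def using p1 p2 by (simp add: ln_div)
    also have "ln (\<Prod>c\<in>CC. ffN N (kk (V \<inter> c))) = (\<Sum>c\<in>CC. ln (ffN N (kk (V \<inter> c))))"
      by (rule ln_prod) (use finite_CC ffN_kk_pos_int[OF VI[OF that]] in \<open>auto simp: less_imp_neq[symmetric]\<close>)
    finally show ?thesis .
  qed
  have part1: "Dif T (\<lambda>V. \<Sum>c\<in>CC. ln (ffN N (kk (V \<inter> c)))) = 0"
  proof -
    have "Dif T (\<lambda>V. \<Sum>c\<in>CC. ln (ffN N (kk (V \<inter> c)))) = (\<Sum>c\<in>CC. Dif T (\<lambda>V. ln (ffN N (kk (V \<inter> c)))))"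
      by (rule Dif_sum)
    also have "\<dots> = 0"
    proof (rule sum.neutral, rule ballI)
      fix c assume c: "c \<in> CC"
      show "Dif T (\<lambda>V. ln (ffN N (kk (V \<inter> c)))) = 0"
      proof (rule Dif_support[OF finT, where W=c])
        fix V show "ln (ffN N (kk (V \<inter> c))) = ln (ffN N (kk (V \<inter> c \<inter> c)))" by simp
      next
        let ?D = "{c\<in>CC. c \<inter> T \<noteq> {}}"
        have "\<not> ?D \<subseteq> {c}"
        proof
          assume "?D \<subseteq> {c}"
          then have "card ?D \<le> 1" using card_mono[of "{c}" ?D] by simp
          then show False using t2 unfolding tt_def by simp
        qed
        then obtain c' where c': "c' \<in> CC" "c' \<inter> T \<noteq> {}" "c' \<noteq> c" by blast
        then obtain x where x: "x \<in> c'" "x \<in> T" by blast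
        have "x \<notin> c" using CC_disj[OF c'(1) c c'(3)] x by auto
        then show "T - c \<noteq> {}" using x by auto
      qed
    qed
    finally show ?thesis .
  qed
  have psum0: "Dif T (\<lambda>V. psum m (kk V)) = 0" if "m \<le> p" for m
  proof (rule Dif_psum[where t="tt T"])
    show "\<And>d. d < tt T \<Longrightarrow> Dif T (\<lambda>V. real (kk V) ^ d) = 0" using kk_pow_Dif[OF T(1)] by blast
    show "m + 2 \<le> tt T" using that t2 unfolding p_def by simp
  qed
  have part2: "Dif T (\<lambda>V. ln (ffN N (kk V))) = Dif T (\<lambda>V. \<Sum>j<kk V. rho_t p (real j / real N))"
  proof -
    have "Dif T (\<lambda>V. ln (ffN N (kk V))) =
          Dif T (\<lambda>V. ln (real N) * psum 0 (kk V) - (\<Sum>m\<in>{1..p}. (1 / real N) ^ m / real m * psum m (kk V))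
           + (\<Sum>j<kk V. rho_t p (real j / real N)))"
      by (rule Dif_cong) (rule ln_ffN_expand[OF kk_le_N], use VI in blast)
    also have "\<dots> = ln (real N) * Dif T (\<lambda>V. psum 0 (kk V))
                   - (\<Sum>m\<in>{1..p}. (1 / real N) ^ m / real m * Dif T (\<lambda>V. psum m (kk V)))
                   + Dif T (\<lambda>V. \<Sum>j<kk V. rho_t p (real j / real N))"
      by (simp only: Dif_add Dif_diff Dif_cmult Dif_sum)
    also have "\<dots> = Dif T (\<lambda>V. \<Sum>j<kk V. rho_t p (real j / real N))"
      using psum0 by simp
    finally show ?thesis .
  qed
  have "phi T = Dif T (\<lambda>V. (\<Sum>c\<in>CC. ln (ffN N (kk (V \<inter> c)))) - ln (ffN N (kk V)))"
    unfolding phi_def by (rule Dif_cong) (rule lnRR)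
  also have "\<dots> = - Dif T (\<lambda>V. \<Sum>j<kk V. rho_t p (real j / real N))"
    by (simp add: Dif_diff part1 part2)
  finally have "\<bar>phi T\<bar> = \<bar>Dif T (\<lambda>V. \<Sum>j<kk V. rho_t p (real j / real N))\<bar>" by simp
  also have "\<dots> \<le> (\<Sum>V\<in>Pow T. \<bar>\<Sum>j<kk V. rho_t p (real j / real N)\<bar>)" by (rule Dif_bound)
  also have "\<dots> \<le> (\<Sum>V\<in>Pow T. real LL * (2 * (real LL / real N) ^ Suc p))"
  proof (rule sum_mono)
    fix V assume V: "V \<in> Pow T"
    have kL: "kk V \<le> LL" using kk_le_LL VI V by auto
    have "\<bar>\<Sum>j<kk V. rho_t p (real j / real N)\<bar> \<le> (\<Sum>j<kk V. \<bar>rho_t p (real j / real N)\<bar>)"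
      by (rule sum_abs)
    also have "\<dots> \<le> (\<Sum>j<kk V. 2 * (real LL / real N) ^ Suc p)"
    proof (rule sum_mono)
      fix j assume j: "j \<in> {..<kk V}"
      have jL: "real j \<le> real LL" using j kL by simp
      have u0: "0 \<le> real j / real N" using Npos by simp
      have u1: "real j / real N \<le> 1/2"
      proof -
        have "2 * real j \<le> real N" using jL big by simp
        then show ?thesis using Npos by (simp add: field_simps)
      qed
      have "\<bar>rho_t p (real j / real N)\<bar> \<le> 2 * (real j / real N) ^ Suc p"
        unfolding rho_t_def by (rule ln_taylor_bound[OF u0 u1])
      also have "\<dots> \<le> 2 * (real LL / real N) ^ Suc p"
        by (intro mult_left_mono power_mono divide_right_mono) (use jL u0 in auto)
      finally show "\<bar>rho_t p (real j / real N)\<bar> \<le> 2 * (real LL / real N) ^ Suc p" .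
    qed
    also have "\<dots> = real (kk V) * (2 * (real LL / real N) ^ Suc p)" by simp
    also have "\<dots> \<le> real LL * (2 * (real LL / real N) ^ Suc p)"
      by (rule mult_right_mono) (use kL Npos in auto)
    finally show "\<bar>\<Sum>j<kk V. rho_t p (real j / real N)\<bar> \<le> real LL * (2 * (real LL / real N) ^ Suc p)" .
  qed
  also have "\<dots> = 2 ^ card T * (2 * real LL) * (real LL / real N) ^ (tt T - 1)"
    using finT tp by (simp add: card_Pow)
  finally show ?thesis .
qed

end


definition LLc :: "nat \<Rightarrow> (nat \<Rightarrow> nat) \<Rightarrow> nat" where
  "LLc r l = (\<Sum>i\<in>{1..r}. l i)"

definition NPc :: "nat \<Rightarrow> real" where
  "NPc r = (\<Sum>P\<in>{P. partition_on {1..r::nat} P}. fact (card P - 1))"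

definition KYc :: "nat \<Rightarrow> (nat \<Rightarrow> nat) \<Rightarrow> real" where
  "KYc r l = 2 ^ (r + 2) * real (LLc r l)"

definition Bc :: "nat \<Rightarrow> (nat \<Rightarrow> nat) \<Rightarrow> real" where
  "Bc r l = (KYc r l + 1) ^ (2 ^ r) * (real (LLc r l) + 1) ^ r * NPc r * 2 ^ LLc r l"

lemma coeff_Pol_bound:
  assumes "finite I" "I \<noteq> {}" "\<And>P. partition_on I P \<Longrightarrow> \<bar>\<Prod>s\<in>P. g s\<bar> \<le> B"
  shows "\<bar>coeff (Pol g I) 1\<bar> \<le> (\<Sum>P\<in>{P. partition_on I P}. fact (card P - 1)) * B"
proof -
  have "\<bar>coeff (Pol g I) 1\<bar> \<le> (\<Sum>P\<in>{P. partition_on I P}. \<bar>(-1) ^ (card P - 1) * fact (card P - 1) * (\<Prod>s\<in>P. g s)\<bar>)"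
    unfolding coeff_Pol[OF assms(1,2)] by (rule sum_abs)
  also have "\<dots> \<le> (\<Sum>P\<in>{P. partition_on I P}. fact (card P - 1) * B)"
  proof (rule sum_mono)
    fix P assume "P \<in> {P. partition_on I P}"
    then have "\<bar>\<Prod>s\<in>P. g s\<bar> \<le> B" using assms(3) by auto
    then show "\<bar>(-1) ^ (card P - 1) * fact (card P - 1) * (\<Prod>s\<in>P. g s)\<bar> \<le> fact (card P - 1) * B"
      by (simp add: abs_mult mult_left_mono)
  qed
  also have "\<dots> = (\<Sum>P\<in>{P. partition_on I P}. fact (card P - 1)) * B" by (simp add: sum_distrib_right)
  finally show ?thesis .
qed

lemma ball_conj_iff: "(\<And>x. x \<in> F \<Longrightarrow> P x = (Q x \<and> R x)) \<Longrightarrow> (\<forall>x\<in>F. P x) = ((\<forall>x\<in>F. Q x) \<and> (\<forall>x\<in>F. R x))"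
  by blast

context cumbig
begin

lemma LL_eq: "LL = LLc r l" unfolding LL_def LLc_def ..

lemma q_le: "real LL / real N \<le> 1/2"
proof -
  have "2 * LL \<le> N" using big by simp
  then show ?thesis using N_pos by (simp add: field_simps)
qed

lemma yy_bound:
  assumes T: "T \<subseteq> {1..r}" "T \<noteq> {}"
  shows "\<bar>yy T\<bar> \<le> KYc r l * (real LL / real N) ^ (tt T - 1)"
proof (cases "tt T \<le> 1")
  case True
  then have "yy T = 0" unfolding yy_def using phi_one[OF T True] by simp
  then show ?thesis unfolding KYc_def by simp
next
  case False
  then have t2: "tt T \<ge> 2" by simp
  define q where "q = real LL / real N"
  have q0: "0 \<le> q" unfolding q_def by simp
  have q1: "q \<le> 1/2" unfolding q_def using q_le .
  have cT: "card T \<le> r" using card_mono[OF _ T(1)] by simp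
  have "\<bar>phi T\<bar> \<le> 2 ^ card T * (2 * real LL) * q ^ (tt T - 1)"
    using phi_bound[OF T t2] unfolding q_def .
  also have "\<dots> \<le> 2 ^ r * (2 * real LL) * q ^ (tt T - 1)"
    by (intro mult_right_mono) (use cT q0 in auto)
  finally have ph: "\<bar>phi T\<bar> \<le> 2 ^ r * (2 * real LL) * q ^ (tt T - 1)" .
  have "q ^ (tt T - 1) \<le> q ^ 1" by (rule power_decreasing) (use t2 q0 q1 in auto)
  then have qq: "q ^ (tt T - 1) \<le> q" by simp
  have c0: "0 \<le> 2 ^ r * (2 * real LL)" by simp
  have "2 ^ r * (2 * real LL) * q ^ (tt T - 1) \<le> 2 ^ r * (2 * real LL) * q"
    using mult_left_mono[OF qq c0] .
  then have "\<bar>phi T\<bar> \<le> 2 ^ r * (2 * real LL) * q" using ph by linarith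
  also have "\<dots> = 2 ^ (r + 1) * real LL * real LL / real N" unfolding q_def by (simp add: field_simps)
  also have "\<dots> \<le> 1/2"
  proof -
    have h: "2 ^ (r + 2) * LL ^ 2 \<le> N" using big by simp
    have "real (2 ^ (r + 2) * LL ^ 2) \<le> real N" by (rule of_nat_mono[OF h])
    then have "2 ^ (r + 2) * real LL ^ 2 \<le> real N" by simp
    then show ?thesis using N_pos by (simp add: field_simps power2_eq_square)
  qed
  finally have "\<bar>phi T\<bar> \<le> 1/2" .
  then have "\<bar>yy T\<bar> \<le> 2 * \<bar>phi T\<bar>" unfolding yy_def by (rule exp_minus_one_bound)
  also have "\<dots> \<le> 2 * (2 ^ r * (2 * real LL) * q ^ (tt T - 1))" using ph by linarith
  also have "\<dots> = KYc r l * q ^ (tt T - 1)" unfolding KYc_def LL_eq[symmetric] by (simp add: power_add)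
  finally show ?thesis unfolding q_def .
qed

lemma mom_le_pow:
  assumes W: "W \<subseteq> {1..r}"
  shows "mom W \<le> (2 / real N) ^ kk W"
proof -
  have ex: "mom W = (if pinj (SP W) then 1 / ffN N (kk W) else 0)"
    using mom_exact[OF W] kk_le_N[OF W] by linarith
  have p: "(real N / 2) ^ kk W > 0" using N_pos by simp
  have "1 / ffN N (kk W) \<le> 1 / (real N / 2) ^ kk W"
    by (rule divide_left_mono) (use ffN_lower[OF kk_le_N[OF W]] p ffN_kk_pos[OF W] in \<open>auto intro: mult_pos_pos\<close>)
  also have "\<dots> = (2 / real N) ^ kk W" by (simp add: power_divide)
  finally show ?thesis using ex by auto
qed

lemma mt_bound:
  assumes s: "s \<subseteq> {1..r}"
  shows "0 \<le> mt s" "mt s \<le> (2 / real N) ^ kk s"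
proof -
  have fin: "finite (s \<inter> c)" for c by (rule finite_subset[of _ "{1..r}"]) (use s in auto)
  show "0 \<le> mt s" unfolding mt_def using mom_nonneg fin by (intro prod_nonneg) auto
  have "mt s \<le> (\<Prod>c\<in>CC. (2 / real N) ^ kk (s \<inter> c))"
    unfolding mt_def
  proof (rule prod_mono)
    fix c assume "c \<in> CC"
    have sc: "s \<inter> c \<subseteq> {1..r}" using s by auto
    show "0 \<le> mom (s \<inter> c) \<and> mom (s \<inter> c) \<le> (2 / real N) ^ kk (s \<inter> c)"
      using mom_nonneg[OF fin] mom_le_pow[OF sc] by auto
  qed
  also have "\<dots> = (2 / real N) ^ (\<Sum>c\<in>CC. kk (s \<inter> c))" by (simp add: power_sum)
  also have "(\<Sum>c\<in>CC. kk (s \<inter> c)) = kk s" using kk_decomp[OF s] by simp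
  finally show "mt s \<le> (2 / real N) ^ kk s" .
qed

lemma SP_Union: "SP (\<Union>P) = (\<Union>s\<in>P. SP s)"
  unfolding SP_def by auto

lemma part_bound:
  assumes P: "partition_on {1..r} P"
  shows "\<bar>\<Prod>s\<in>P. mF mt F s\<bar> \<le> (2 / real N) ^ kk {1..r}"
proof -
  have finP: "finite P" using finite_elements[OF _ P] by simp
  have sub: "s \<subseteq> {1..r}" if "s \<in> P" for s using P that partition_onD1 by blast
  have x0: "0 \<le> 2 / real N" by simp
  have x1: "2 / real N \<le> 1" using N_pos big by (simp add: field_simps)
  have "\<bar>\<Prod>s\<in>P. mF mt F s\<bar> = (\<Prod>s\<in>P. \<bar>mF mt F s\<bar>)" by (simp add: abs_prod)
  also have "\<dots> \<le> (\<Prod>s\<in>P. (2 / real N) ^ kk s)"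
  proof (rule prod_mono)
    fix s assume "s \<in> P"
    then have "0 \<le> mt s" "mt s \<le> (2 / real N) ^ kk s" using mt_bound sub by auto
    then show "0 \<le> \<bar>mF mt F s\<bar> \<and> \<bar>mF mt F s\<bar> \<le> (2 / real N) ^ kk s"
      unfolding mF_def by auto
  qed
  also have "\<dots> = (2 / real N) ^ (\<Sum>s\<in>P. kk s)" by (simp add: power_sum)
  also have "\<dots> \<le> (2 / real N) ^ kk {1..r}"
  proof (rule power_decreasing[OF _ x0 x1])
    have "{1..r} = \<Union>P" using partition_onD1[OF P] .
    then have "SP {1..r} = (\<Union>s\<in>P. SP s)" using SP_Union by simp
    then have "kk {1..r} = card (\<Union>s\<in>P. SP s)" unfolding kk_def by simp
    also have "\<dots> \<le> (\<Sum>s\<in>P. card (SP s))" by (rule card_UN_le[OF finP])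
    finally show "kk {1..r} \<le> (\<Sum>s\<in>P. kk s)" unfolding kk_def .
  qed
  finally show ?thesis .
qed

lemma coeff_mF_bound:
  assumes "r \<ge> 1"
  shows "\<bar>coeff (Pol (mF mt F) {1..r}) 1\<bar> \<le> NPc r * (2 / real N) ^ kk {1..r}"
  unfolding NPc_def by (rule coeff_Pol_bound) (use assms part_bound in auto)

lemma vanish:
  assumes r1: "r \<ge> 1" and F: "F \<subseteq> Pow {1..r} - {{}}"
    and small: "(\<Sum>T\<in>F. tt T - 1) + 1 < card CC"
  shows "coeff (Pol (mF mt F) {1..r}) 1 = 0"
proof -
  define D where "D T = {c\<in>CC. c \<inter> T \<noteq> {}}" for T
  have finF: "finite F" using F by (rule finite_subset) simp
  have DT: "\<forall>T\<in>F. D T \<subseteq> CC \<and> D T \<noteq> {}"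
  proof
    fix T assume T: "T \<in> F"
    then have "T \<subseteq> {1..r}" "T \<noteq> {}" using F by auto
    then have "tt T \<ge> 1" by (rule tt_pos)
    then have "card (D T) \<noteq> 0" unfolding D_def tt_def by simp
    then have "D T \<noteq> {}" by auto
    then show "D T \<subseteq> CC \<and> D T \<noteq> {}" unfolding D_def by auto
  qed
  have "\<exists>J. J \<subseteq> CC \<and> J \<noteq> {} \<and> J \<noteq> CC \<and> (\<forall>T\<in>F. D T \<subseteq> J \<or> D T \<inter> J = {})"
    by (rule split_exists[OF finF finite_CC DT]) (use small in \<open>simp add: D_def tt_def\<close>)
  then obtain JJ where JJ: "JJ \<subseteq> CC" "JJ \<noteq> {}" "JJ \<noteq> CC" "\<forall>T\<in>F. D T \<subseteq> JJ \<or> D T \<inter> JJ = {}"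
    by blast
  define J where "J = \<Union>JJ"
  have cls: "\<exists>c\<in>CC. x \<in> c" if "x \<in> {1..r}" for x using that CC_Union by auto
  have notJ: "x \<notin> J" if "c \<in> CC" "c \<notin> JJ" "x \<in> c" for c x
  proof
    assume "x \<in> J"
    then obtain c' where "c' \<in> JJ" "x \<in> c'" unfolding J_def by auto
    then have "c' = c" using CC_disj[of c' c] that JJ(1) by blast
    then show False using that \<open>c' \<in> JJ\<close> by simp
  qed
  have JI: "J \<subseteq> {1..r}" unfolding J_def using JJ(1) CC_sub by blast
  have Jne: "J \<noteq> {}"
  proof -
    obtain c where "c \<in> JJ" using JJ(2) by auto
    moreover have "c \<noteq> {}" using CC_ne JJ(1) \<open>c \<in> JJ\<close> by auto
    ultimately show ?thesis unfolding J_def by auto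
  qed
  have IJne: "{1..r} - J \<noteq> {}"
  proof -
    obtain c where c: "c \<in> CC" "c \<notin> JJ" using JJ(1,3) by blast
    then obtain x where "x \<in> c" using CC_ne by blast
    then show ?thesis using notJ[OF c] CC_sub[OF c(1)] by blast
  qed
  have Tsplit: "T \<subseteq> J \<or> T \<inter> J = {}" if T: "T \<in> F" for T
  proof (cases "D T \<subseteq> JJ")
    case True
    have "T \<subseteq> J"
    proof
      fix x assume x: "x \<in> T"
      have "T \<subseteq> {1..r}" using F T by blast
      then have "x \<in> {1..r}" using x by blast
      then obtain c where c: "c \<in> CC" "x \<in> c" using cls by blast
      then have "c \<in> D T" unfolding D_def using x by auto
      then show "x \<in> J" unfolding J_def using True c by auto
    qed
    then show ?thesis by simp
  next
    case False
    then have dis: "D T \<inter> JJ = {}" using JJ(4) T by auto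
    have "T \<inter> J = {}"
    proof (rule ccontr)
      assume "T \<inter> J \<noteq> {}"
      then obtain x c where "x \<in> T" "c \<in> JJ" "x \<in> c" unfolding J_def by auto
      then have "c \<in> D T" unfolding D_def using JJ(1) by auto
      then show False using dis \<open>c \<in> JJ\<close> by auto
    qed
    then show ?thesis by simp
  qed
  have mt_split: "mt s = mt (s \<inter> J) * mt (s - J)" if s: "s \<subseteq> {1..r}" for s
  proof -
    have "mt (s \<inter> J) * mt (s - J) = (\<Prod>c\<in>CC. mom (s \<inter> J \<inter> c) * mom ((s - J) \<inter> c))"
      unfolding mt_def by (simp add: prod.distrib)
    also have "\<dots> = (\<Prod>c\<in>CC. mom (s \<inter> c))"
    proof (rule prod.cong[OF refl])
      fix c assume c: "c \<in> CC"
      show "mom (s \<inter> J \<inter> c) * mom ((s - J) \<inter> c) = mom (s \<inter> c)"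
      proof (cases "c \<in> JJ")
        case True
        then have "c \<subseteq> J" unfolding J_def by auto
        then have "s \<inter> J \<inter> c = s \<inter> c" "(s - J) \<inter> c = {}" by auto
        then show ?thesis using mom_empty by simp
      next
        case False
        then have "c \<inter> J = {}" using notJ[OF c False] by auto
        then have "s \<inter> J \<inter> c = {}" "(s - J) \<inter> c = s \<inter> c" by auto
        then show ?thesis using mom_empty by simp
      qed
    qed
    finally show ?thesis unfolding mt_def by simp
  qed
  have ind_split: "(\<forall>T\<in>F. T \<subseteq> s \<or> T \<inter> s = {}) \<longleftrightarrow>
      (\<forall>T\<in>F. T \<subseteq> s \<inter> J \<or> T \<inter> (s \<inter> J) = {}) \<and> (\<forall>T\<in>F. T \<subseteq> s - J \<or> T \<inter> (s - J) = {})" for s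
  proof -
    have "(T \<subseteq> s \<or> T \<inter> s = {}) \<longleftrightarrow>
          (T \<subseteq> s \<inter> J \<or> T \<inter> (s \<inter> J) = {}) \<and> (T \<subseteq> s - J \<or> T \<inter> (s - J) = {})" if T: "T \<in> F" for T
    proof (cases "T \<subseteq> J")
      case True
      then have e1: "T \<inter> (s - J) = {}" "(T \<subseteq> s \<inter> J) = (T \<subseteq> s)" "(T \<inter> (s \<inter> J) = {}) = (T \<inter> s = {})"
        by auto
      show ?thesis unfolding e1 by simp
    next
      case False
      then have TJ: "T \<inter> J = {}" using Tsplit[OF T] by simp
      then have e1: "T \<inter> (s \<inter> J) = {}" "(T \<subseteq> s - J) = (T \<subseteq> s)" "T \<inter> (s - J) = T \<inter> s"
        by auto
      show ?thesis unfolding e1 by simp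
    qed
    then show ?thesis by (rule ball_conj_iff)
  qed
  have fac: "mF mt F s = mF mt F (s \<inter> J) * mF mt F (s - J)" if s: "s \<subseteq> {1..r}" for s
    unfolding mF_def using mt_split[OF s] ind_split[of s] by auto
  have g0: "mF mt F {} = 1" unfolding mF_def using mt_empty by simp
  show ?thesis by (rule cum_split[OF _ JI Jne IJne g0 fac]) simp_all
qed

end


context cumsetup
begin

lemma kappa_Pol:
  assumes "r \<ge> 1"
  shows "joint_cumulant (unif_perm N) {1..r} (match_indicator l \<alpha> \<beta>) = coeff (Pol mom {1..r}) 1"
proof -
  have ne: "{1..r} \<noteq> {}" using assms by simp
  show ?thesis by (simp only: joint_cumulant_def coeff_Pol[OF finite_atLeastAtMost ne] mom_def)
qed

lemma kappa_small:
  assumes "r \<ge> 1"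
  shows "\<bar>joint_cumulant (unif_perm N) {1..r} (match_indicator l \<alpha> \<beta>)\<bar> \<le> NPc r"
proof -
  have "\<bar>coeff (Pol mom {1..r}) 1\<bar> \<le> NPc r * 1"
    unfolding NPc_def
  proof (rule coeff_Pol_bound)
    show "{1..r} \<noteq> {}" using assms by simp
    fix P assume P: "partition_on {1..r} P"
    have fin: "finite s" if "s \<in> P" for s
      by (rule finite_subset[of _ "{1..r}"]) (use P that partition_onD1 in auto)
    have "\<bar>\<Prod>s\<in>P. mom s\<bar> = (\<Prod>s\<in>P. \<bar>mom s\<bar>)" by (simp add: abs_prod)
    also have "\<dots> \<le> (\<Prod>s\<in>P. 1)"
      by (rule prod_mono) (use fin mom_nonneg mom_le1 in auto)
    finally show "\<bar>\<Prod>s\<in>P. mom s\<bar> \<le> 1" by simp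
  qed simp
  then show ?thesis using kappa_Pol[OF assms] by simp
qed

lemma card_CC_pos: "r \<ge> 1 \<Longrightarrow> card CC \<ge> 1"
proof -
  assume r: "r \<ge> 1"
  have "1 \<in> \<Union>CC" using CC_Union r by auto
  then have "CC \<noteq> {}" by auto
  then show ?thesis using finite_CC by (simp add: Suc_leI card_gt_0_iff)
qed

end

context cumbig
begin

lemma kappa_expand:
  assumes r: "r \<ge> 1"
  shows "joint_cumulant (unif_perm N) {1..r} (match_indicator l \<alpha> \<beta>) =
    (\<Sum>F\<in>Pow (Pow {1..r} - {{}}). (\<Prod>T\<in>F. yy T) * coeff (Pol (mF mt F) {1..r}) 1)"
  unfolding kappa_Pol[OF r]
  by (rule cum_expand[OF finite_atLeastAtMost _ mt_empty mom_empty mom_expand]) (use r in auto)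

lemma term_bound:
  assumes r: "r \<ge> 1" and F: "F \<in> Pow (Pow {1..r} - {{}})"
  shows "\<bar>(\<Prod>T\<in>F. yy T) * coeff (Pol (mF mt F) {1..r}) 1\<bar>
           \<le> Bc r l * (1 / real N) ^ (card CC - 1 + kk {1..r})"
proof -
  define x where "x = 1 / real N"
  define q where "q = real LL / real N"
  define b where "b = card CC"
  define \<mu> where "\<mu> = kk {1..r}"
  have Npos: "real N > 0" using N_pos by simp
  have x0: "0 \<le> x" unfolding x_def by simp
  have x1: "x \<le> 1" unfolding x_def using N_pos by simp
  have q0: "0 \<le> q" unfolding q_def by simp
  have q1: "q \<le> 1" unfolding q_def using q_le by linarith
  have qx: "q = real LL * x" unfolding q_def x_def by simp
  have KY0: "0 \<le> KYc r l" unfolding KYc_def by simp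
  have Bpos: "0 \<le> Bc r l" unfolding Bc_def NPc_def KYc_def by (intro mult_nonneg_nonneg sum_nonneg) auto
  have FI: "F \<subseteq> Pow {1..r} - {{}}" using F by auto
  have finF: "finite F" using FI by (rule finite_subset) simp
  show ?thesis
  proof (cases "(\<Sum>T\<in>F. tt T - 1) + 1 < card CC")
    case True
    then have "coeff (Pol (mF mt F) {1..r}) 1 = 0" by (rule vanish[OF r FI])
    then show ?thesis using Bpos by simp
  next
    case False
    then have sumge: "b - 1 \<le> (\<Sum>T\<in>F. tt T - 1)" unfolding b_def by simp
    have "\<bar>\<Prod>T\<in>F. yy T\<bar> = (\<Prod>T\<in>F. \<bar>yy T\<bar>)" by (simp add: abs_prod)
    also have "\<dots> \<le> (\<Prod>T\<in>F. KYc r l * q ^ (tt T - 1))"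
    proof (rule prod_mono)
      fix T assume "T \<in> F"
      then have "T \<subseteq> {1..r}" "T \<noteq> {}" using FI by auto
      then show "0 \<le> \<bar>yy T\<bar> \<and> \<bar>yy T\<bar> \<le> KYc r l * q ^ (tt T - 1)"
        using yy_bound unfolding q_def by auto
    qed
    also have "\<dots> = KYc r l ^ card F * q ^ (\<Sum>T\<in>F. tt T - 1)"
      by (simp add: prod.distrib power_sum)
    also have "\<dots> \<le> (KYc r l + 1) ^ (2 ^ r) * q ^ (b - 1)"
    proof (rule mult_mono)
      have cF: "card F \<le> 2 ^ r"
      proof -
        have "card F \<le> card (Pow {1..r})" by (rule card_mono) (use FI in auto)
        then show ?thesis by (simp add: card_Pow)
      qed
      have "KYc r l ^ card F \<le> (KYc r l + 1) ^ card F" by (rule power_mono) (use KY0 in auto)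
      also have "\<dots> \<le> (KYc r l + 1) ^ (2 ^ r)" by (rule power_increasing[OF cF]) (use KY0 in auto)
      finally show "KYc r l ^ card F \<le> (KYc r l + 1) ^ (2 ^ r)" .
      show "q ^ (\<Sum>T\<in>F. tt T - 1) \<le> q ^ (b - 1)" by (rule power_decreasing[OF sumge q0 q1])
    qed (use KY0 q0 in auto)
    also have "q ^ (b - 1) \<le> (real LL + 1) ^ r * x ^ (b - 1)"
    proof -
      have "q ^ (b - 1) = real LL ^ (b - 1) * x ^ (b - 1)" unfolding qx by (simp add: power_mult_distrib)
      also have "real LL ^ (b - 1) \<le> (real LL + 1) ^ r"
      proof -
        have "real LL ^ (b - 1) \<le> (real LL + 1) ^ (b - 1)" by (rule power_mono) auto
        also have "\<dots> \<le> (real LL + 1) ^ r" by (rule power_increasing) (use card_CC_le in \<open>auto simp: b_def\<close>)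
        finally show ?thesis .
      qed
      then have "real LL ^ (b - 1) * x ^ (b - 1) \<le> (real LL + 1) ^ r * x ^ (b - 1)"
        by (rule mult_right_mono) (use x0 in simp)
      finally show ?thesis .
    qed
    then have "(KYc r l + 1) ^ (2 ^ r) * q ^ (b - 1) \<le> (KYc r l + 1) ^ (2 ^ r) * ((real LL + 1) ^ r * x ^ (b - 1))"
      by (rule mult_left_mono) (use KY0 in simp)
    finally have Y: "\<bar>\<Prod>T\<in>F. yy T\<bar> \<le> (KYc r l + 1) ^ (2 ^ r) * ((real LL + 1) ^ r * x ^ (b - 1))" .
    have "\<bar>coeff (Pol (mF mt F) {1..r}) 1\<bar> \<le> NPc r * (2 / real N) ^ \<mu>"
      unfolding \<mu>_def by (rule coeff_mF_bound[OF r])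
    also have "(2 / real N) ^ \<mu> = 2 ^ \<mu> * x ^ \<mu>" unfolding x_def by (simp add: power_divide)
    also have "NPc r * (2 ^ \<mu> * x ^ \<mu>) \<le> NPc r * (2 ^ LL * x ^ \<mu>)"
    proof (rule mult_left_mono)
      have "\<mu> \<le> LL" unfolding \<mu>_def by (rule kk_le_LL) simp
      then have "(2::real) ^ \<mu> \<le> 2 ^ LL" by (rule power_increasing) simp
      then show "2 ^ \<mu> * x ^ \<mu> \<le> 2 ^ LL * x ^ \<mu>" by (rule mult_right_mono) (use x0 in simp)
      show "0 \<le> NPc r" unfolding NPc_def by (rule sum_nonneg) simp
    qed
    finally have Cf: "\<bar>coeff (Pol (mF mt F) {1..r}) 1\<bar> \<le> NPc r * (2 ^ LL * x ^ \<mu>)" .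
    have "\<bar>(\<Prod>T\<in>F. yy T) * coeff (Pol (mF mt F) {1..r}) 1\<bar> =
          \<bar>\<Prod>T\<in>F. yy T\<bar> * \<bar>coeff (Pol (mF mt F) {1..r}) 1\<bar>" by (simp add: abs_mult)
    also have "\<dots> \<le> ((KYc r l + 1) ^ (2 ^ r) * ((real LL + 1) ^ r * x ^ (b - 1))) * (NPc r * (2 ^ LL * x ^ \<mu>))"
      by (rule mult_mono[OF Y Cf]) (use KY0 x0 in auto)
    also have "\<dots> = Bc r l * x ^ (b - 1 + \<mu>)"
      unfolding Bc_def LL_eq by (simp add: power_add algebra_simps)
    finally show ?thesis unfolding x_def b_def \<mu>_def .
  qed
qed

lemma kappa_big:
  assumes r: "r \<ge> 1"
  shows "\<bar>joint_cumulant (unif_perm N) {1..r} (match_indicator l \<alpha> \<beta>)\<bar>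
           \<le> 2 ^ (2 ^ r) * Bc r l * (1 / real N) ^ (card CC - 1 + kk {1..r})"
proof -
  let ?E = "Pow (Pow {1..r} - {{}})"
  let ?e = "card CC - 1 + kk {1..r}"
  have "\<bar>joint_cumulant (unif_perm N) {1..r} (match_indicator l \<alpha> \<beta>)\<bar> \<le>
        (\<Sum>F\<in>?E. \<bar>(\<Prod>T\<in>F. yy T) * coeff (Pol (mF mt F) {1..r}) 1\<bar>)"
    unfolding kappa_expand[OF r] by (rule sum_abs)
  also have "\<dots> \<le> (\<Sum>F\<in>?E. Bc r l * (1 / real N) ^ ?e)"
    by (rule sum_mono) (rule term_bound[OF r])
  also have "\<dots> = real (card ?E) * (Bc r l * (1 / real N) ^ ?e)" by simp
  also have "\<dots> \<le> 2 ^ (2 ^ r) * (Bc r l * (1 / real N) ^ ?e)"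
  proof (rule mult_right_mono)
    have "card (Pow {1..r} - {{}}) \<le> card (Pow {1..r})" by (rule card_mono) auto
    then have "card (Pow {1..r} - {{}}) \<le> 2 ^ r" by (simp add: card_Pow)
    then have "card ?E \<le> 2 ^ (2 ^ r)"
      by (simp add: card_Pow)
    then show "real (card ?E) \<le> 2 ^ (2 ^ r)" by (metis of_nat_le_iff of_nat_numeral of_nat_power)
    show "0 \<le> Bc r l * (1 / real N) ^ ?e"
      unfolding Bc_def NPc_def KYc_def by (intro mult_nonneg_nonneg sum_nonneg) auto
  qed
  finally show ?thesis by simp
qed

end


theorem lemma6p1:
  fixes r :: nat and l :: "nat \<Rightarrow> nat"
  assumes "r \<ge> 1" and "\<And>i. i \<in> {1..r} \<Longrightarrow> l i \<ge> 1"
  shows "\<exists>C::real. \<forall>(N::nat) (\<alpha>::nat \<Rightarrow> nat \<Rightarrow> nat) (\<beta>::nat \<Rightarrow> nat \<Rightarrow> nat).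
           (\<forall>i\<in>{1..r}. \<forall>j\<in>{1..l i}. \<alpha> i j \<in> {1..N} \<and> \<beta> i j \<in> {1..N}) \<longrightarrow>
           \<bar>joint_cumulant (unif_perm N) {1..r} (match_indicator l \<alpha> \<beta>)\<bar>
             \<le> C * real N powr (- (real (num_components r l \<alpha> \<beta>) - 1) - real (mu_e r l \<alpha> \<beta>))"
proof -
  define L where "L = LLc r l"
  define N0 :: nat where "N0 = 2 ^ (r + 2) * L ^ 2 + 2 * L + 2"
  define C where "C = max (2 ^ (2 ^ r) * Bc r l) (NPc r * real N0 ^ (r + L))"
  have NP0: "0 \<le> NPc r" unfolding NPc_def by (rule sum_nonneg) simp
  show ?thesis
  proof (intro exI[of _ C] allI impI)
    fix N :: nat and \<alpha> \<beta> :: "nat \<Rightarrow> nat \<Rightarrow> nat"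
    assume rng: "\<forall>i\<in>{1..r}. \<forall>j\<in>{1..l i}. \<alpha> i j \<in> {1..N} \<and> \<beta> i j \<in> {1..N}"
    interpret S: cumsetup r l \<alpha> \<beta> N using rng by unfold_locales
    have "1 \<in> {1..r}" using assms(1) by simp
    moreover have "1 \<in> {1..l 1}" using assms(2)[of 1] assms(1) by simp
    ultimately have "\<alpha> 1 1 \<in> {1..N}" using rng by blast
    then have Npos: "N \<ge> 1" by simp
    have b_eq: "num_components r l \<alpha> \<beta> = card S.CC"
      unfolding num_components_def S.CC_def S.rho_def ..
    have mu_eq: "mu_e r l \<alpha> \<beta> = S.kk {1..r}"
      unfolding mu_e_def S.kk_def S.SP_def ..
    have LL_eq: "S.LL = L" unfolding S.LL_def L_def LLc_def ..
    define e where "e = card S.CC - 1 + S.kk {1..r}"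
    have b1: "card S.CC \<ge> 1" by (rule S.card_CC_pos[OF assms(1)])
    have expo: "- (real (num_components r l \<alpha> \<beta>) - 1) - real (mu_e r l \<alpha> \<beta>) = - real e"
      unfolding b_eq mu_eq e_def using b1 by (simp add: of_nat_diff)
    have pw: "real N powr (- real e) = (1 / real N) ^ e"
      using Npos by (simp add: powr_minus powr_realpow power_one_over inverse_eq_divide)
    have e_le: "e \<le> r + L"
    proof -
      have "card S.CC \<le> r" by (rule S.card_CC_le)
      moreover have "S.kk {1..r} \<le> L" using S.kk_le_LL[of "{1..r}"] LL_eq by simp
      ultimately show ?thesis unfolding e_def by linarith
    qed
    have x0: "0 \<le> 1 / real N" by simp
    have x1: "1 / real N \<le> 1" using Npos by simp
    have "\<bar>joint_cumulant (unif_perm N) {1..r} (match_indicator l \<alpha> \<beta>)\<bar> \<le> C * (1 / real N) ^ e"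
    proof (cases "N0 \<le> N")
      case True
      interpret B: cumbig r l \<alpha> \<beta> N
        by unfold_locales (use True LL_eq in \<open>simp add: N0_def\<close>)
      have "\<bar>joint_cumulant (unif_perm N) {1..r} (match_indicator l \<alpha> \<beta>)\<bar> \<le> 2 ^ (2 ^ r) * Bc r l * (1 / real N) ^ e"
        unfolding e_def by (rule B.kappa_big[OF assms(1)])
      also have "\<dots> \<le> C * (1 / real N) ^ e"
        unfolding C_def by (rule mult_right_mono) (use x0 in auto)
      finally show ?thesis .
    next
      case False
      have "N0 > 0" unfolding N0_def by simp
      then have N0pos: "real N0 > 0" by simp
      have "\<bar>joint_cumulant (unif_perm N) {1..r} (match_indicator l \<alpha> \<beta>)\<bar> \<le> NPc r"
        by (rule S.kappa_small[OF assms(1)])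
      also have "\<dots> = NPc r * real N0 ^ (r + L) * (1 / real N0) ^ (r + L)"
        using N0pos by (simp add: power_one_over)
      also have "\<dots> \<le> NPc r * real N0 ^ (r + L) * (1 / real N) ^ e"
      proof (rule mult_left_mono)
        have "(1 / real N0) ^ (r + L) \<le> (1 / real N) ^ (r + L)"
          by (rule power_mono) (use False Npos N0pos in \<open>auto simp: field_simps\<close>)
        also have "\<dots> \<le> (1 / real N) ^ e" by (rule power_decreasing[OF e_le x0 x1])
        finally show "(1 / real N0) ^ (r + L) \<le> (1 / real N) ^ e" .
        show "0 \<le> NPc r * real N0 ^ (r + L)" using NP0 by simp
      qed
      also have "\<dots> \<le> C * (1 / real N) ^ e"
        unfolding C_def by (rule mult_right_mono) (use x0 in auto)
      finally show ?thesis .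
    qed
    then show "\<bar>joint_cumulant (unif_perm N) {1..r} (match_indicator l \<alpha> \<beta>)\<bar>
             \<le> C * real N powr (- (real (num_components r l \<alpha> \<beta>) - 1) - real (mu_e r l \<alpha> \<beta>))"
      unfolding expo pw .
  qed
qed


end
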